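(* Let $R(x,t)>0$, $V_x(x,r,t)$, $V_r(x,r,t)$ be smooth on $\{0\le r\le R(x,t)\}$, and assume the incompressibility condition $\frac{\partial (rV_r)}{\partial r}+r\frac{\partial V_x}{\partial x}=0$ and the streamline boundary condition $\frac{\partial R}{\partial t}+V_x|_{r=R}\frac{\partial R}{\partial x}=V_r|_{r=R}$. Let $D>0$, let $C(x,t)$ be smooth, define $\eta$, $\tilde\eta=\eta-\langle\eta\rangle$ and $\tilde V_x = V_x-\langle V_x\rangle$ as in the context. Suppose $G_2=G_2(x,t)$ (independent of $r$) and a smooth function $W_2(x,r,t)$ with $r\,\partial W_2/\partial r\to 0$ as $r\to0$ and $\frac{\partial W_2}{\partial r}(x,R(x,t),t)=0$ satisfy $$\mathcal{L}W_2 = \frac{\partial}{\partial t}\Big(\frac{\partial C}{\partial x}\tilde\eta\Big) + G_2 - \tilde\eta\,\frac{\partial}{\partial x}\Big(\frac{\partial C}{\partial x}\langle V_x\rangle\Big) + V_x\frac{\partial}{\partial x}\Big(\frac{\partial C}{\partial x}\tilde\eta\Big) + V_r\,\frac{\partial C}{\partial x}\,\frac{\partial\tilde\eta}{\partial r}.$$ Then necessarily $$G_2 = -\frac{1}{R^2}\frac{\partial}{\partial x}\Big(\frac{\partial C}{\partial x}\,\big\langle R^2\,\eta\,\tilde V_x\big\rangle\Big).$$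
   Context: Cylindrical coordinates $(x,r,\theta)$ with axial symmetry, vessel radius $R(x,t)$; $\mathcal{L}f = D\left(\frac{\partial^2 f}{\partial r^2}+\frac1r\frac{\partial f}{\partial r}\right)$. Radial average: $\langle f\rangle(x,t)=\frac{2}{R^2}\int_0^{R} f(x,r,t)\,r\,dr$. $\eta(x,r,t)=\frac{1}{D}\int_0^r\frac{1}{z}\int_0^z\big(V_x(x,s,t)-\langle V_x\rangle(x,t)\big)s\,ds\,dz$. (The right-hand side of the equation for $W_2$ is what one obtains from the second equation of the center manifold hierarchy with $W_0=C$, $W_1=\frac{\partial C}{\partial x}\tilde\eta$, $G_1=-\langle V_x\rangle\frac{\partial C}{\partial x}$.) *)

theory Defs
  imports "HOL-Analysis.Analysis"
begin

text \<open>Iterated directional (Frechet) derivatives and C^infinity on a set U (intended: U open):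
  all iterated partial derivatives exist, i.e. are differentiable at each point of U.\<close>
fun iter_dderiv :: "'a::real_normed_vector list \<Rightarrow> ('a \<Rightarrow> real) \<Rightarrow> 'a \<Rightarrow> real" where
  "iter_dderiv [] f = f"
| "iter_dderiv (v # vs) f = (\<lambda>p. frechet_derivative (iter_dderiv vs f) (at p) v)"

definition smooth_on :: "('a::euclidean_space \<Rightarrow> real) \<Rightarrow> 'a set \<Rightarrow> bool" where
  "smooth_on f U \<longleftrightarrow> (\<forall>vs \<in> lists Basis. \<forall>p\<in>U. iter_dderiv vs f differentiable (at p))"

definition smooth_near :: "('a::euclidean_space \<Rightarrow> real) \<Rightarrow> 'a set \<Rightarrow> bool" where
  "smooth_near f S \<longleftrightarrow> (\<exists>U. open U \<and> S \<subseteq> U \<and> smooth_on f U)"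

definition pdx :: "(real \<Rightarrow> real \<Rightarrow> real \<Rightarrow> real) \<Rightarrow> real \<Rightarrow> real \<Rightarrow> real \<Rightarrow> real" where
  "pdx f x r t = deriv (\<lambda>y. f y r t) x"
definition pdr :: "(real \<Rightarrow> real \<Rightarrow> real \<Rightarrow> real) \<Rightarrow> real \<Rightarrow> real \<Rightarrow> real \<Rightarrow> real" where
  "pdr f x r t = deriv (\<lambda>s. f x s t) r"
definition pdt :: "(real \<Rightarrow> real \<Rightarrow> real \<Rightarrow> real) \<Rightarrow> real \<Rightarrow> real \<Rightarrow> real \<Rightarrow> real" where
  "pdt f x r t = deriv (\<lambda>s. f x r s) t"
definition pdx2 :: "(real \<Rightarrow> real \<Rightarrow> real) \<Rightarrow> real \<Rightarrow> real \<Rightarrow> real" where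
  "pdx2 f x t = deriv (\<lambda>y. f y t) x"
definition pdt2 :: "(real \<Rightarrow> real \<Rightarrow> real) \<Rightarrow> real \<Rightarrow> real \<Rightarrow> real" where
  "pdt2 f x t = deriv (\<lambda>s. f x s) t"

definition Lop :: "real \<Rightarrow> (real \<Rightarrow> real \<Rightarrow> real \<Rightarrow> real) \<Rightarrow> real \<Rightarrow> real \<Rightarrow> real \<Rightarrow> real" where
  "Lop D f x r t = D * (pdr (pdr f) x r t + (1 / r) * pdr f x r t)"

definition ravg :: "(real \<Rightarrow> real \<Rightarrow> real) \<Rightarrow> (real \<Rightarrow> real \<Rightarrow> real \<Rightarrow> real) \<Rightarrow> real \<Rightarrow> real \<Rightarrow> real" where
  "ravg R f x t = 2 / (R x t)^2 * integral {0..R x t} (\<lambda>r. f x r t * r)"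

definition eta :: "real \<Rightarrow> (real \<Rightarrow> real \<Rightarrow> real) \<Rightarrow> (real \<Rightarrow> real \<Rightarrow> real \<Rightarrow> real) \<Rightarrow> real \<Rightarrow> real \<Rightarrow> real \<Rightarrow> real" where
  "eta D R Vx x r t = (1 / D) * integral {0..r}
      (\<lambda>z. (1 / z) * integral {0..z} (\<lambda>s. (Vx x s t - ravg R Vx x t) * s))"

end

theory Submission
  imports Defs
begin

lemma iter_dderiv_append: "iter_dderiv vs (iter_dderiv ws f) = iter_dderiv (vs @ ws) f"
  by (induction vs) auto

lemma smooth_on_iter:
  assumes "smooth_on f U" "v \<in> Basis"
  shows "smooth_on (iter_dderiv [v] f) U"
  unfolding smooth_on_def
proof (intro ballI)
  fix vs :: "'a list" and p assume vs: "vs \<in> lists Basis" and p: "p \<in> U"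
  have "vs @ [v] \<in> lists Basis" using vs assms(2) by auto
  then have "iter_dderiv (vs @ [v]) f differentiable (at p)" using assms(1) p unfolding smooth_on_def by blast
  then show "iter_dderiv vs (iter_dderiv [v] f) differentiable (at p)" by (metis iter_dderiv_append)
qed

lemma smooth_on_diff:
  assumes "smooth_on f U" "p \<in> U"
  shows "f differentiable (at p)"
  using assms unfolding smooth_on_def by (metis iter_dderiv.simps(1) lists.Nil)

lemma smooth_on_cont:
  assumes "smooth_on f U" "open U"
  shows "continuous_on U f"
  using assms by (metis continuous_at_imp_continuous_on differentiable_imp_continuous_within smooth_on_diff)

definition "e1 = ((1::real),(0::real),(0::real))"
definition "e2 = ((0::real),(1::real),(0::real))"
definition "e3 = ((0::real),(0::real),(1::real))"
definition "f1 = ((1::real),(0::real))"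
definition "f2 = ((0::real),(1::real))"

lemma e_Basis: "e1 \<in> Basis" "e2 \<in> Basis" "e3 \<in> Basis" "f1 \<in> Basis" "f2 \<in> Basis"
  by (auto simp: e1_def e2_def e3_def f1_def f2_def Basis_prod_def zero_prod_def)

lemma pd3_1:
  assumes "(\<lambda>(x,r,t). f x r t) differentiable (at (x,r,t))"
  shows "((\<lambda>y. f y r t) has_real_derivative frechet_derivative (\<lambda>(x,r,t). f x r t) (at (x,r,t)) e1) (at x)"
proof -
  let ?F = "\<lambda>(x,r,t). f x r t" let ?F' = "frechet_derivative ?F (at (x,r,t))"
  have d: "(?F has_derivative ?F') (at (x,r,t))" using assms frechet_derivative_works by blast
  have l: "linear ?F'" using d has_derivative_linear by blast
  have g: "((\<lambda>y::real. (y,r,t)) has_derivative (\<lambda>h. (h,0,0))) (at x)"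
    by (auto intro!: derivative_eq_intros simp: zero_prod_def)
  have "((\<lambda>y. ?F (y,r,t)) has_derivative (\<lambda>h. ?F' (h,0,0))) (at x)"
    using has_derivative_compose[OF g, of ?F ?F'] d by (simp add: o_def)
  moreover have "(\<lambda>h. ?F' (h,0,0)) = (\<lambda>h. h * ?F' e1)"
  proof
    fix h :: real
    have "(h,(0::real),(0::real)) = h *\<^sub>R e1" by (simp add: e1_def)
    then show "?F' (h,0,0) = h * ?F' e1" using linear_scale[OF l] by simp
  qed
  ultimately have "((\<lambda>y. f y r t) has_derivative (\<lambda>h. h * ?F' e1)) (at x)" by simp
  moreover have "(\<lambda>h. h * ?F' e1) = (*) (?F' e1)" by (rule ext) (simp add: mult.commute)
  ultimately show ?thesis by (simp add: has_field_derivative_def)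
qed

lemma pd3_2:
  assumes "(\<lambda>(x,r,t). f x r t) differentiable (at (x,r,t))"
  shows "((\<lambda>s. f x s t) has_real_derivative frechet_derivative (\<lambda>(x,r,t). f x r t) (at (x,r,t)) e2) (at r)"
proof -
  let ?F = "\<lambda>(x,r,t). f x r t" let ?F' = "frechet_derivative ?F (at (x,r,t))"
  have d: "(?F has_derivative ?F') (at (x,r,t))" using assms frechet_derivative_works by blast
  have l: "linear ?F'" using d has_derivative_linear by blast
  have g: "((\<lambda>y::real. (x,y,t)) has_derivative (\<lambda>h. (0,h,0))) (at r)"
    by (auto intro!: derivative_eq_intros simp: zero_prod_def)
  have "((\<lambda>y. ?F (x,y,t)) has_derivative (\<lambda>h. ?F' (0,h,0))) (at r)"
    using has_derivative_compose[OF g, of ?F ?F'] d by (simp add: o_def)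
  moreover have "(\<lambda>h. ?F' (0,h,0)) = (\<lambda>h. h * ?F' e2)"
  proof
    fix h :: real
    have "((0::real),h,(0::real)) = h *\<^sub>R e2" by (simp add: e2_def)
    then show "?F' (0,h,0) = h * ?F' e2" using linear_scale[OF l] by simp
  qed
  ultimately have "((\<lambda>s. f x s t) has_derivative (\<lambda>h. h * ?F' e2)) (at r)" by simp
  moreover have "(\<lambda>h. h * ?F' e2) = (*) (?F' e2)" by (rule ext) (simp add: mult.commute)
  ultimately show ?thesis by (simp add: has_field_derivative_def)
qed

lemma pd3_3:
  assumes "(\<lambda>(x,r,t). f x r t) differentiable (at (x,r,t))"
  shows "((\<lambda>s. f x r s) has_real_derivative frechet_derivative (\<lambda>(x,r,t). f x r t) (at (x,r,t)) e3) (at t)"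
proof -
  let ?F = "\<lambda>(x,r,t). f x r t" let ?F' = "frechet_derivative ?F (at (x,r,t))"
  have d: "(?F has_derivative ?F') (at (x,r,t))" using assms frechet_derivative_works by blast
  have l: "linear ?F'" using d has_derivative_linear by blast
  have g: "((\<lambda>y::real. (x,r,y)) has_derivative (\<lambda>h. (0,0,h))) (at t)"
    by (auto intro!: derivative_eq_intros simp: zero_prod_def)
  have "((\<lambda>y. ?F (x,r,y)) has_derivative (\<lambda>h. ?F' (0,0,h))) (at t)"
    using has_derivative_compose[OF g, of ?F ?F'] d by (simp add: o_def)
  moreover have "(\<lambda>h. ?F' (0,0,h)) = (\<lambda>h. h * ?F' e3)"
  proof
    fix h :: real
    have "((0::real),(0::real),h) = h *\<^sub>R e3" by (simp add: e3_def)
    then show "?F' (0,0,h) = h * ?F' e3" using linear_scale[OF l] by simp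
  qed
  ultimately have "((\<lambda>s. f x r s) has_derivative (\<lambda>h. h * ?F' e3)) (at t)" by simp
  moreover have "(\<lambda>h. h * ?F' e3) = (*) (?F' e3)" by (rule ext) (simp add: mult.commute)
  ultimately show ?thesis by (simp add: has_field_derivative_def)
qed

lemma pd2_1:
  assumes "(\<lambda>(x,t). f x t) differentiable (at (x,t))"
  shows "((\<lambda>y. f y t) has_real_derivative frechet_derivative (\<lambda>(x,t). f x t) (at (x,t)) f1) (at x)"
proof -
  let ?F = "\<lambda>(x,t). f x t" let ?F' = "frechet_derivative ?F (at (x,t))"
  have d: "(?F has_derivative ?F') (at (x,t))" using assms frechet_derivative_works by blast
  have l: "linear ?F'" using d has_derivative_linear by blast
  have g: "((\<lambda>y::real. (y,t)) has_derivative (\<lambda>h. (h,0))) (at x)"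
    by (auto intro!: derivative_eq_intros simp: zero_prod_def)
  have "((\<lambda>y. ?F (y,t)) has_derivative (\<lambda>h. ?F' (h,0))) (at x)"
    using has_derivative_compose[OF g, of ?F ?F'] d by (simp add: o_def)
  moreover have "(\<lambda>h. ?F' (h,0)) = (\<lambda>h. h * ?F' f1)"
  proof
    fix h :: real
    have "(h,(0::real)) = h *\<^sub>R f1" by (simp add: f1_def)
    then show "?F' (h,0) = h * ?F' f1" using linear_scale[OF l] by simp
  qed
  ultimately have "((\<lambda>y. f y t) has_derivative (\<lambda>h. h * ?F' f1)) (at x)" by simp
  moreover have "(\<lambda>h. h * ?F' f1) = (*) (?F' f1)" by (rule ext) (simp add: mult.commute)
  ultimately show ?thesis by (simp add: has_field_derivative_def)
qed

lemma pd2_2: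
  assumes "(\<lambda>(x,t). f x t) differentiable (at (x,t))"
  shows "((\<lambda>s. f x s) has_real_derivative frechet_derivative (\<lambda>(x,t). f x t) (at (x,t)) f2) (at t)"
proof -
  let ?F = "\<lambda>(x,t). f x t" let ?F' = "frechet_derivative ?F (at (x,t))"
  have d: "(?F has_derivative ?F') (at (x,t))" using assms frechet_derivative_works by blast
  have l: "linear ?F'" using d has_derivative_linear by blast
  have g: "((\<lambda>y::real. (x,y)) has_derivative (\<lambda>h. (0,h))) (at t)"
    by (auto intro!: derivative_eq_intros simp: zero_prod_def)
  have "((\<lambda>y. ?F (x,y)) has_derivative (\<lambda>h. ?F' (0,h))) (at t)"
    using has_derivative_compose[OF g, of ?F ?F'] d by (simp add: o_def)
  moreover have "(\<lambda>h. ?F' (0,h)) = (\<lambda>h. h * ?F' f2)"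
  proof
    fix h :: real
    have "((0::real),h) = h *\<^sub>R f2" by (simp add: f2_def)
    then show "?F' (0,h) = h * ?F' f2" using linear_scale[OF l] by simp
  qed
  ultimately have "((\<lambda>s. f x s) has_derivative (\<lambda>h. h * ?F' f2)) (at t)" by simp
  moreover have "(\<lambda>h. h * ?F' f2) = (*) (?F' f2)" by (rule ext) (simp add: mult.commute)
  ultimately show ?thesis by (simp add: has_field_derivative_def)
qed

lemma dist3_le:
  fixes a b c a' b' c' :: real
  shows "dist (a,b,c) (a',b',c') \<le> \<bar>a-a'\<bar> + \<bar>b-b'\<bar> + \<bar>c-c'\<bar>"
proof -
  have "dist (a,b,c) (a',b',c') = norm (a-a', b-b', c-c')" by (simp add: dist_norm)
  also have "\<dots> \<le> norm (a-a') + norm (b-b', c-c')" by (rule norm_Pair_le)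
  also have "norm (b-b', c-c') \<le> norm (b-b') + norm (c-c')" by (rule norm_Pair_le)
  finally show ?thesis by simp
qed

lemma smooth_on_pd_cont:
  assumes "smooth_on f U" "open U" "v \<in> Basis"
  shows "continuous_on U (\<lambda>p. frechet_derivative f (at p) v)"
proof -
  have "continuous_on U (iter_dderiv [v] f)" using smooth_on_iter[OF assms(1,3)] assms(2) by (rule smooth_on_cont)
  then show ?thesis by simp
qed

lemma smooth_on_pd_diff:
  assumes "smooth_on f U" "p \<in> U" "v \<in> Basis"
  shows "(\<lambda>p. frechet_derivative f (at p) v) differentiable (at p)"
proof -
  have "iter_dderiv [v] f differentiable (at p)" using smooth_on_iter[OF assms(1,3)] assms(2) by (rule smooth_on_diff)
  then show ?thesis by simp
qed

lemma leibniz_moving: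
  fixes f fy :: "real \<Rightarrow> real \<Rightarrow> real"
  fixes \<rho> :: "real \<Rightarrow> real"
  assumes d: "\<delta> > 0" and b0: "\<rho> y0 > 0"
    and rho: "(\<rho> has_real_derivative \<rho>') (at y0)"
    and fc: "continuous_on ({y0-\<delta>..y0+\<delta>} \<times> {0..\<rho> y0+\<delta>}) (\<lambda>(y,r). f y r)"
    and fyc: "continuous_on ({y0-\<delta>..y0+\<delta>} \<times> {0..\<rho> y0+\<delta>}) (\<lambda>(y,r). fy y r)"
    and fd: "\<And>y r. y \<in> {y0-\<delta>..y0+\<delta>} \<Longrightarrow> r \<in> {0..\<rho> y0+\<delta>} \<Longrightarrow>
        ((\<lambda>y. f y r) has_real_derivative fy y r) (at y within {y0-\<delta>..y0+\<delta>})"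
  shows "((\<lambda>y. integral {0..\<rho> y} (f y)) has_real_derivative
           (integral {0..\<rho> y0} (fy y0) + \<rho>' * f y0 (\<rho> y0))) (at y0)"
proof -
  define b0 where "b0 = \<rho> y0"
  define U where "U = {y0-\<delta>..y0+\<delta>}"
  define X where "X = ball y0 \<delta>"
  define \<epsilon> where "\<epsilon> = min \<delta> b0"
  define Y where "Y = ball b0 \<epsilon>"
  have eps: "\<epsilon> > 0" using d b0 by (simp add: \<epsilon>_def b0_def)
  have XU: "X \<subseteq> U" by (auto simp: X_def U_def dist_real_def)
  have Ysub: "Y \<subseteq> {0<..<b0+\<delta>}" by (auto simp: Y_def \<epsilon>_def dist_real_def)
  have contf: "continuous_on {0..b0+\<delta>} (f y)" if "y \<in> U" for y
  proof -
    have "continuous_on {0..b0+\<delta>} (\<lambda>r. (\<lambda>(y,r). f y r) (y, r))"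
      by (rule continuous_on_compose2[OF fc]) (use that in \<open>auto simp: U_def b0_def intro!: continuous_intros\<close>)
    then show ?thesis by simp
  qed
  have "((\<lambda>y. integral (cbox 0 b0) (f y)) has_field_derivative integral (cbox 0 b0) (fy y0)) (at y0 within U)"
  proof (rule leibniz_rule_field_derivative)
    show "((\<lambda>y. f y t) has_field_derivative fy x t) (at x within U)" if "x \<in> U" "t \<in> cbox 0 b0" for x t
      using fd that d by (auto simp: U_def b0_def)
    show "f x integrable_on cbox 0 b0" if "x \<in> U" for x
      using contf[OF that] d
      by (auto intro!: integrable_continuous_real continuous_on_subset[of "{0..b0+\<delta>}"])
    show "continuous_on (U \<times> cbox 0 b0) (\<lambda>(x, t). fy x t)"
      by (rule continuous_on_subset[OF fyc]) (use d in \<open>auto simp: U_def b0_def\<close>)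
    show "y0 \<in> U" using d by (simp add: U_def)
    show "convex U" by (simp add: U_def)
  qed
  then have "((\<lambda>y. integral {0..b0} (f y)) has_field_derivative integral {0..b0} (fy y0)) (at y0)"
    using d by (subst (asm) at_within_interior) (auto simp: U_def)
  moreover have "(\<lambda>h. h * integral {0..b0} (fy y0)) = (*) (integral {0..b0} (fy y0))"
    by (rule ext) (simp add: mult.commute)
  ultimately have fx: "((\<lambda>y. integral {0..b0} (f y)) has_derivative (\<lambda>h. h * integral {0..b0} (fy y0))) (at y0 within X)"
    unfolding has_field_derivative_def by (metis has_derivative_at_withinI)
  have fyd: "((\<lambda>b. integral {0..b} (f y)) has_derivative blinfun_apply (blinfun_scaleR_left (f y b))) (at b within Y)"
    if "y \<in> X" "b \<in> Y" for y b
  proof -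
    have "b \<in> {0<..<b0+\<delta>}" using Ysub that by auto
    then have "((\<lambda>b. integral {0..b} (f y)) has_real_derivative f y b) (at b within {0..b0+\<delta>})"
      using contf[of y] XU that by (intro integral_has_real_derivative) auto
    then have "((\<lambda>b. integral {0..b} (f y)) has_real_derivative f y b) (at b)"
      using \<open>b \<in> {0<..<b0+\<delta>}\<close> by (subst (asm) at_within_interior) auto
    moreover have "blinfun_apply (blinfun_scaleR_left (f y b)) = (*) (f y b)"
      by (rule ext) (simp add: mult.commute)
    ultimately show ?thesis
      unfolding has_field_derivative_def by (metis has_derivative_at_withinI)
  qed
  have "continuous (at (y0, b0) within ({y0-\<delta>..y0+\<delta>} \<times> {0..\<rho> y0+\<delta>})) (\<lambda>(y,r). f y r)"
    using fc d b0 by (auto simp: continuous_on_eq_continuous_within b0_def)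
  then have "continuous (at (y0, b0) within X \<times> Y) (\<lambda>(y,r). f y r)"
    by (rule continuous_within_subset) (use XU Ysub in \<open>auto simp: U_def b0_def\<close>)
  then have fyc': "continuous (at (y0, b0) within X \<times> Y) (\<lambda>(y,r). blinfun_scaleR_left (f y r))"
    unfolding split_beta' by (intro continuous_intros) (simp add: split_beta')
  have "((\<lambda>(y, b). integral {0..b} (f y)) has_derivative
      (\<lambda>(hy, hb). hy * integral {0..b0} (fy y0) + blinfun_apply (blinfun_scaleR_left (f y0 b0)) hb))
      (at (y0, b0) within X \<times> Y)"
    by (rule has_derivative_partialsI[OF fx fyd fyc']) (use eps in \<open>auto simp: Y_def\<close>)
  moreover have "at (y0, b0) within X \<times> Y = at (y0, b0)"
    using d eps by (intro at_within_open) (auto simp: X_def Y_def intro!: open_Times)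
  ultimately have G: "((\<lambda>(y, b). integral {0..b} (f y)) has_derivative
      (\<lambda>(hy, hb). hy * integral {0..b0} (fy y0) + hb * f y0 b0)) (at (y0, b0))"
    by simp
  have g: "((\<lambda>y. (y, \<rho> y)) has_derivative (\<lambda>h. (h, \<rho>' * h))) (at y0)"
    using rho by (auto intro!: derivative_eq_intros simp: has_field_derivative_def)
  have "((\<lambda>y. integral {0..\<rho> y} (f y)) has_derivative
      (\<lambda>h. h * integral {0..b0} (fy y0) + \<rho>' * h * f y0 b0)) (at y0)"
    using has_derivative_compose[OF g G[unfolded b0_def]] by (simp add: o_def b0_def)
  moreover have "(\<lambda>h. h * integral {0..b0} (fy y0) + \<rho>' * h * f y0 b0) = (*) (integral {0..\<rho> y0} (fy y0) + \<rho>' * f y0 (\<rho> y0))"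
    by (rule ext) (simp add: b0_def algebra_simps)
  ultimately show ?thesis
    unfolding has_field_derivative_def by metis
qed

lemma scale01_mem:
  fixes z u a b :: real
  assumes "a \<le> 0" "0 \<le> b" "z \<in> {a..b}" "u \<in> {0..1}"
  shows "z * u \<in> {a..b}"
proof (cases "z \<ge> 0")
  case True
  then have "0 \<le> z*u" "z*u \<le> z" using assms by (auto simp: mult_left_le)
  then show ?thesis using assms by auto
next
  case False
  then have "z*u \<le> 0" "z \<le> z*u" using assms by (auto simp: mult_nonpos_nonneg mult_le_cancel_left1)
  then show ?thesis using assms by auto
qed

lemma cont_param01:
  fixes g :: "real \<Rightarrow> real \<Rightarrow> real"
  assumes gc: "continuous_on (Y \<times> {a..b}) (\<lambda>(y,z). g y z)" and ab: "a \<le> 0" "0 \<le> b"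
  shows "continuous_on (Y \<times> {a..b}) (\<lambda>(y,z). integral {0..1} (\<lambda>u. g y (z*u) * u))"
proof -
  have c1: "continuous_on ((Y \<times> {a..b}) \<times> cbox 0 1) (\<lambda>q. (\<lambda>(y,z). g y z) (fst (fst q), snd (fst q) * snd q))"
    by (rule continuous_on_compose2[OF gc]) (auto intro!: continuous_intros scale01_mem[OF ab])
  have "continuous_on ((Y \<times> {a..b}) \<times> cbox 0 1) (\<lambda>q. (\<lambda>(y,z). g y z) (fst (fst q), snd (fst q) * snd q) * snd q)"
    by (intro continuous_on_mult c1 continuous_intros)
  then have "continuous_on ((Y \<times> {a..b}) \<times> cbox 0 1) (\<lambda>(p,u). (\<lambda>p u. (\<lambda>(y,z). g y z) (fst p, snd p * u) * u) p u)"
    by (simp add: split_beta')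
  then have "continuous_on (Y \<times> {a..b}) (\<lambda>p. integral (cbox 0 1) ((\<lambda>p u. (\<lambda>(y,z). g y z) (fst p, snd p * u) * u) p))"
    by (intro integral_continuous_on_param) (simp add: split_beta')
  then show ?thesis by (simp add: split_beta')
qed

lemma deriv_param01:
  fixes g gy :: "real \<Rightarrow> real \<Rightarrow> real"
  assumes gc: "continuous_on (Y \<times> {a..b}) (\<lambda>(y,z). g y z)"
    and gyc: "continuous_on (Y \<times> {a..b}) (\<lambda>(y,z). gy y z)"
    and gd: "\<And>y z. y \<in> Y \<Longrightarrow> z \<in> {a..b} \<Longrightarrow> ((\<lambda>y. g y z) has_real_derivative gy y z) (at y within Y)"
    and ab: "a \<le> 0" "0 \<le> b" and Y: "convex Y" "y \<in> Y" and z: "z \<in> {a..b}"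
  shows "((\<lambda>y. integral {0..1} (\<lambda>u. g y (z*u) * u)) has_real_derivative integral {0..1} (\<lambda>u. gy y (z*u) * u)) (at y within Y)"
proof -
  have "((\<lambda>y. integral (cbox 0 1) (\<lambda>u. g y (z*u) * u)) has_real_derivative integral (cbox 0 1) (\<lambda>u. gy y (z*u) * u)) (at y within Y)"
  proof (rule leibniz_rule_field_derivative)
    show "((\<lambda>x. g x (z * t) * t) has_field_derivative gy x (z * t) * t) (at x within Y)"
      if "x \<in> Y" "t \<in> cbox 0 1" for x t
      using gd[OF that(1) scale01_mem[OF ab z, of t]] that by (auto intro: DERIV_cmult_right)
    show "(\<lambda>u. g x (z * u) * u) integrable_on cbox 0 1" if "x \<in> Y" for x
    proof -
      have "continuous_on {0..1} (\<lambda>u. (\<lambda>(y,z). g y z) (x, z * u) * u)"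
        by (intro continuous_on_mult continuous_on_id continuous_on_compose2[OF gc])
           (use that scale01_mem[OF ab z] in \<open>auto intro!: continuous_intros\<close>)
      then show ?thesis by (auto intro: integrable_continuous_real)
    qed
    show "continuous_on (Y \<times> cbox 0 1) (\<lambda>(x, t). gy x (z * t) * t)"
    proof -
      have "continuous_on (Y \<times> cbox 0 1) (\<lambda>p. (\<lambda>(y,z). gy y z) (fst p, z * snd p) * snd p)"
        by (intro continuous_on_mult continuous_intros continuous_on_compose2[OF gyc])
           (use scale01_mem[OF ab z] in \<open>auto\<close>)
      then show ?thesis by (simp add: split_beta')
    qed
  qed (use Y in auto)
  then show ?thesis by simp
qed

lemma image_div_01:
  fixes z :: real assumes "z > 0" shows "(\<lambda>x. x / z) ` {0..z} = {0..1}"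
proof
  show "(\<lambda>x. x / z) ` {0..z} \<subseteq> {0..1}" using assms by auto
  show "{0..1} \<subseteq> (\<lambda>x. x / z) ` {0..z}"
  proof
    fix u :: real assume u: "u \<in> {0..1}"
    then have "z*u \<in> {0..z}" using assms by (auto simp: mult_left_le)
    moreover have "u = (z*u)/z" using assms by simp
    ultimately show "u \<in> (\<lambda>x. x / z) ` {0..z}" by blast
  qed
qed

lemma subst01:
  fixes g :: "real \<Rightarrow> real"
  assumes z: "z \<ge> 0"
  shows "integral {0..z} (\<lambda>s. g s * s) = z^2 * integral {0..1} (\<lambda>u. g (z*u) * u)"
proof (cases "z = 0")
  case True then show ?thesis by simp
next
  case False
  then have zp: "z > 0" using z by simp
  have "integral ((\<lambda>x. x / z) ` {0..z}) (\<lambda>x. (\<lambda>s. g s * s) (z * x)) = (1 / \<bar>z\<bar>) *\<^sub>R integral {0..z} (\<lambda>s. g s * s)"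
    using zp by (intro integral_stretch_real) simp
  moreover have "(\<lambda>x. (\<lambda>s. g s * s) (z * x)) = (\<lambda>x. (g (z * x) * x) * z)"
    by (rule ext) (simp add: ac_simps)
  ultimately have "integral {0..1} (\<lambda>x. (g (z * x) * x) * z) = (1 / z) * integral {0..z} (\<lambda>s. g s * s)"
    using zp by (simp add: image_div_01)
  then have "integral {0..1} (\<lambda>x. g (z * x) * x) * z = (1 / z) * integral {0..z} (\<lambda>s. g s * s)"
    by simp
  then show ?thesis using zp by (simp add: field_simps power2_eq_square)
qed

lemma int_pow:
  fixes z :: real assumes "z \<ge> 0"
  shows "integral {0..z} (\<lambda>s. s^n) = z^(Suc n) / Suc n"
proof -
  have "((\<lambda>s. s^n) has_integral ((\<lambda>s. s^(Suc n) / Suc n) z - (\<lambda>s. s^(Suc n) / Suc n) 0)) {0..z}"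
  proof (rule fundamental_theorem_of_calculus[OF assms])
    fix x :: real assume "x \<in> {0..z}"
    have "((\<lambda>s. s^(Suc n)) has_real_derivative real (Suc n) * x^n) (at x)"
      using DERIV_pow[of "Suc n" x] by simp
    then have "((\<lambda>s. s^(Suc n) / Suc n) has_real_derivative real (Suc n) * x^n / Suc n) (at x)"
      by (rule DERIV_cdivide)
    then have "((\<lambda>s. s^(Suc n) / Suc n) has_real_derivative x^n) (at x)"
      by (simp del: of_nat_Suc)
    then show "((\<lambda>s. s^(Suc n) / Suc n) has_vector_derivative x^n) (at x within {0..z})"
      by (simp add: has_real_derivative_iff_has_vector_derivative has_vector_derivative_at_within)
  qed
  then show ?thesis by (simp add: integral_unique)
qed

lemma cont_section:
  assumes "continuous_on (Y \<times> Z) (\<lambda>(y,r). f y r)" "y \<in> Y" "S \<subseteq> Z"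
  shows "continuous_on S (f y)"
proof -
  have "continuous_on S (\<lambda>r. (\<lambda>(y,r). f y r) (y, r))"
    by (rule continuous_on_compose2[OF assms(1)]) (use assms in \<open>auto intro!: continuous_intros\<close>)
  then show ?thesis by simp
qed

locale slice =
  fixes v vy :: "real \<Rightarrow> real \<Rightarrow> real" and \<rho> :: "real \<Rightarrow> real" and \<rho>' y0 \<delta> D :: real
  assumes dpos: "\<delta> > 0" and Dpos: "D > 0"
    and rpos: "\<And>y. \<rho> y > 0"
    and rder: "(\<rho> has_real_derivative \<rho>') (at y0)"
    and vc: "continuous_on ({y0-\<delta>..y0+\<delta>} \<times> {-\<delta>..\<rho> y0+\<delta>}) (\<lambda>(y,r). v y r)"
    and vyc: "continuous_on ({y0-\<delta>..y0+\<delta>} \<times> {-\<delta>..\<rho> y0+\<delta>}) (\<lambda>(y,r). vy y r)"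
    and vd: "\<And>y r. y \<in> {y0-\<delta>..y0+\<delta>} \<Longrightarrow> r \<in> {-\<delta>..\<rho> y0+\<delta>} \<Longrightarrow>
       ((\<lambda>y. v y r) has_real_derivative vy y r) (at y within {y0-\<delta>..y0+\<delta>})"
begin

definition m where "m y = 2 / (\<rho> y)^2 * integral {0..\<rho> y} (\<lambda>r. v y r * r)"
definition et where "et y r = (1 / D) * integral {0..r} (\<lambda>z. (1/z) * integral {0..z} (\<lambda>s. (v y s - m y) * s))"
definition I where "I y z = integral {0..1} (\<lambda>u. v y (z*u) * u)"
definition Iy where "Iy y z = integral {0..1} (\<lambda>u. vy y (z*u) * u)"
definition A where "A y r = r^2 * integral {0..1} (\<lambda>w. I y (r*w) * w)"
definition Ay where "Ay y r = r^2 * integral {0..1} (\<lambda>w. Iy y (r*w) * w)"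

lemma ab: "-\<delta> \<le> 0" "0 \<le> \<rho> y0 + \<delta>"
  using dpos rpos[of y0] by auto

lemma I_cont: "continuous_on ({y0-\<delta>..y0+\<delta>} \<times> {-\<delta>..\<rho> y0+\<delta>}) (\<lambda>(y,z). I y z)"
  unfolding I_def by (rule cont_param01[OF vc ab])

lemma Iy_cont: "continuous_on ({y0-\<delta>..y0+\<delta>} \<times> {-\<delta>..\<rho> y0+\<delta>}) (\<lambda>(y,z). Iy y z)"
  unfolding Iy_def by (rule cont_param01[OF vyc ab])

lemma I_der: "y \<in> {y0-\<delta>..y0+\<delta>} \<Longrightarrow> z \<in> {-\<delta>..\<rho> y0+\<delta>} \<Longrightarrow>
    ((\<lambda>y. I y z) has_real_derivative Iy y z) (at y within {y0-\<delta>..y0+\<delta>})"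
  unfolding I_def Iy_def by (rule deriv_param01[OF vc vyc vd ab]) auto

lemma J_cont: "continuous_on ({y0-\<delta>..y0+\<delta>} \<times> {-\<delta>..\<rho> y0+\<delta>}) (\<lambda>(y,r). integral {0..1} (\<lambda>w. I y (r*w) * w))"
  by (rule cont_param01[OF I_cont ab])

lemma Jy_cont: "continuous_on ({y0-\<delta>..y0+\<delta>} \<times> {-\<delta>..\<rho> y0+\<delta>}) (\<lambda>(y,r). integral {0..1} (\<lambda>w. Iy y (r*w) * w))"
  by (rule cont_param01[OF Iy_cont ab])

lemma A_cont: "continuous_on ({y0-\<delta>..y0+\<delta>} \<times> {-\<delta>..\<rho> y0+\<delta>}) (\<lambda>(y,r). A y r)"
proof -
  have "continuous_on ({y0-\<delta>..y0+\<delta>} \<times> {-\<delta>..\<rho> y0+\<delta>}) (\<lambda>p. (snd p)^2 * (\<lambda>(y,r). integral {0..1} (\<lambda>w. I y (r*w) * w)) p)"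
    by (intro continuous_intros J_cont)
  then show ?thesis by (simp add: A_def split_beta')
qed

lemma Ay_cont: "continuous_on ({y0-\<delta>..y0+\<delta>} \<times> {-\<delta>..\<rho> y0+\<delta>}) (\<lambda>(y,r). Ay y r)"
proof -
  have "continuous_on ({y0-\<delta>..y0+\<delta>} \<times> {-\<delta>..\<rho> y0+\<delta>}) (\<lambda>p. (snd p)^2 * (\<lambda>(y,r). integral {0..1} (\<lambda>w. Iy y (r*w) * w)) p)"
    by (intro continuous_intros Jy_cont)
  then show ?thesis by (simp add: Ay_def split_beta')
qed

lemma A_der: "y \<in> {y0-\<delta>..y0+\<delta>} \<Longrightarrow> r \<in> {-\<delta>..\<rho> y0+\<delta>} \<Longrightarrow>
    ((\<lambda>y. A y r) has_real_derivative Ay y r) (at y within {y0-\<delta>..y0+\<delta>})"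
  unfolding A_def Ay_def
  by (intro DERIV_cmult deriv_param01[OF I_cont Iy_cont I_der ab]) auto

lemma v_cont: "y \<in> {y0-\<delta>..y0+\<delta>} \<Longrightarrow> S \<subseteq> {-\<delta>..\<rho> y0+\<delta>} \<Longrightarrow> continuous_on S (v y)"
  by (rule cont_section[OF vc])

lemma I_cont1: "y \<in> {y0-\<delta>..y0+\<delta>} \<Longrightarrow> S \<subseteq> {-\<delta>..\<rho> y0+\<delta>} \<Longrightarrow> continuous_on S (I y)"
  by (rule cont_section[OF I_cont])

lemma inner_eq:
  assumes y: "y \<in> {y0-\<delta>..y0+\<delta>}" and z: "z \<in> {0..\<rho> y0+\<delta>}"
  shows "(1/z) * integral {0..z} (\<lambda>s. (v y s - m y) * s) = z * I y z - m y * z / 2"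
proof (cases "z = 0")
  case True then show ?thesis by simp
next
  case False
  then have zp: "z > 0" using z by auto
  have c: "continuous_on {0..z} (v y)" using y z ab by (intro v_cont) auto
  have i1: "(\<lambda>s. v y s * s) integrable_on {0..z}"
    by (intro integrable_continuous_real continuous_intros c)
  have i2: "(\<lambda>s. m y * s) integrable_on {0..z}"
    by (intro integrable_continuous_real continuous_intros)
  have "integral {0..z} (\<lambda>s. (v y s - m y) * s) = integral {0..z} (\<lambda>s. v y s * s - m y * s)"
    by (simp add: algebra_simps)
  also have "\<dots> = integral {0..z} (\<lambda>s. v y s * s) - integral {0..z} (\<lambda>s. m y * s)"
    by (rule integral_diff[OF i1 i2])
  also have "integral {0..z} (\<lambda>s. v y s * s) = z^2 * I y z"
    unfolding I_def using zp by (intro subst01) auto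
  also have "integral {0..z} (\<lambda>s. m y * s) = m y * (z^2 / 2)"
    using int_pow[of z 1] zp by simp
  finally show ?thesis using zp by (simp add: field_simps power2_eq_square)
qed

lemma et_eq:
  assumes y: "y \<in> {y0-\<delta>..y0+\<delta>}" and r: "r \<in> {0..\<rho> y0+\<delta>}"
  shows "et y r = (A y r - m y * r^2 / 4) / D"
proof -
  have "integral {0..r} (\<lambda>z. (1/z) * integral {0..z} (\<lambda>s. (v y s - m y) * s))
      = integral {0..r} (\<lambda>z. I y z * z - m y / 2 * z)"
    by (rule integral_cong) (use inner_eq[OF y] r in \<open>auto simp: algebra_simps\<close>)
  also have "\<dots> = integral {0..r} (\<lambda>z. I y z * z) - integral {0..r} (\<lambda>z. m y / 2 * z)"
  proof (rule integral_diff)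
    have "continuous_on {0..r} (I y)" using y r ab by (intro I_cont1) auto
    then show "(\<lambda>z. I y z * z) integrable_on {0..r}"
      by (intro integrable_continuous_real continuous_intros)
    show "(\<lambda>z. m y / 2 * z) integrable_on {0..r}"
      by (intro integrable_continuous_real continuous_intros)
  qed
  also have "integral {0..r} (\<lambda>z. I y z * z) = A y r"
    unfolding A_def using r by (intro subst01) auto
  also have "integral {0..r} (\<lambda>z. m y / 2 * z) = m y / 2 * (r^2 / 2)"
    using int_pow[of r 1] r by simp
  finally have eq: "integral {0..r} (\<lambda>z. (1/z) * integral {0..z} (\<lambda>s. (v y s - m y) * s)) = A y r - m y * r^2 / 4"
    by (simp add: power2_eq_square)
  show ?thesis unfolding et_def eq using Dpos by (simp add: field_simps)
qed

end

lemma lin3: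
  fixes F f g h :: "real \<Rightarrow> real"
  assumes "f integrable_on S" "g integrable_on S" "h integrable_on S"
    and "\<And>x. x \<in> S \<Longrightarrow> F x = a * f x + b * g x + c * h x"
  shows "integral S F = a * integral S f + b * integral S g + c * integral S h"
proof -
  have "((\<lambda>x. a * f x + b * g x + c * h x) has_integral (a * integral S f + b * integral S g + c * integral S h)) S"
    using assms(1-3) by (intro has_integral_add has_integral_mult_right integrable_integral)
  then have "(F has_integral (a * integral S f + b * integral S g + c * integral S h)) S"
    using assms(4) by (subst has_integral_cong) auto
  then show ?thesis by (rule integral_unique)
qed

context slice begin

lemma near:
  obtains e where "e > 0" "e \<le> \<delta>" "\<And>y. y \<in> ball y0 e \<Longrightarrow> \<rho> y < \<rho> y0 + \<delta>"
proof -
  have "isCont \<rho> y0" using rder by (rule DERIV_isCont)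
  then obtain d where d: "d > 0" "\<And>y. dist y y0 < d \<Longrightarrow> dist (\<rho> y) (\<rho> y0) < \<delta>"
    using dpos unfolding continuous_at_eps_delta by blast
  show ?thesis
  proof (rule that[of "min d \<delta>"])
    show "min d \<delta> > 0" using d dpos by simp
    show "min d \<delta> \<le> \<delta>" by simp
    fix y assume "y \<in> ball y0 (min d \<delta>)"
    then have "dist y y0 < d" by (simp add: dist_commute)
    then show "\<rho> y < \<rho> y0 + \<delta>" using d(2)[of y] by (simp add: dist_real_def abs_less_iff)
  qed
qed

lemma LM:
  fixes f fy :: "real \<Rightarrow> real \<Rightarrow> real"
  assumes fc: "continuous_on ({y0-\<delta>..y0+\<delta>} \<times> {0..\<rho> y0+\<delta>}) (\<lambda>(y,r). f y r)"
    and fyc: "continuous_on ({y0-\<delta>..y0+\<delta>} \<times> {0..\<rho> y0+\<delta>}) (\<lambda>(y,r). fy y r)"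
    and fd: "\<And>y r. y \<in> {y0-\<delta>..y0+\<delta>} \<Longrightarrow> r \<in> {0..\<rho> y0+\<delta>} \<Longrightarrow>
        ((\<lambda>y. f y r) has_real_derivative fy y r) (at y within {y0-\<delta>..y0+\<delta>})"
  shows "((\<lambda>y. integral {0..\<rho> y} (f y)) has_real_derivative
           (integral {0..\<rho> y0} (fy y0) + \<rho>' * f y0 (\<rho> y0))) (at y0)"
  by (rule leibniz_moving[OF dpos rpos rder fc fyc fd])

lemma box_sub: "{y0-\<delta>..y0+\<delta>} \<times> {0..\<rho> y0+\<delta>} \<subseteq> {y0-\<delta>..y0+\<delta>} \<times> {-\<delta>..\<rho> y0+\<delta>}"
  using dpos by auto

lemma S_der: "((\<lambda>y. integral {0..\<rho> y} (\<lambda>r. v y r * r)) has_real_derivative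
    (integral {0..\<rho> y0} (\<lambda>r. vy y0 r * r) + \<rho>' * (v y0 (\<rho> y0) * \<rho> y0))) (at y0)"
proof (rule LM)
  show "continuous_on ({y0-\<delta>..y0+\<delta>} \<times> {0..\<rho> y0+\<delta>}) (\<lambda>(y,r). v y r * r)"
    using continuous_on_subset[OF vc box_sub] by (auto simp: split_beta' intro!: continuous_intros)
  show "continuous_on ({y0-\<delta>..y0+\<delta>} \<times> {0..\<rho> y0+\<delta>}) (\<lambda>(y,r). vy y r * r)"
    using continuous_on_subset[OF vyc box_sub] by (auto simp: split_beta' intro!: continuous_intros)
  show "((\<lambda>y. v y r * r) has_real_derivative vy y r * r) (at y within {y0-\<delta>..y0+\<delta>})"
    if "y \<in> {y0-\<delta>..y0+\<delta>}" "r \<in> {0..\<rho> y0+\<delta>}" for y r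
    using vd[of y r] that dpos by (auto intro: DERIV_cmult_right)
qed

lemma m_diff: "m differentiable (at y0)"
proof -
  have "(\<lambda>y. integral {0..\<rho> y} (\<lambda>r. v y r * r)) differentiable (at y0)"
    using S_der real_differentiable_def by blast
  moreover have "\<rho> differentiable (at y0)" using rder real_differentiable_def by blast
  ultimately have "(\<lambda>y. 2 / (\<rho> y)^2 * integral {0..\<rho> y} (\<lambda>r. v y r * r)) differentiable (at y0)"
    using rpos[of y0] by (intro differentiable_mult differentiable_divide differentiable_power differentiable_const) auto
  then show ?thesis by (simp add: m_def[abs_def])
qed

definition md where "md = deriv m y0"

lemma m_der: "(m has_real_derivative md) (at y0)"
  unfolding md_def using m_diff DERIV_deriv_iff_real_differentiable by blast

definition etd where "etd r = (Ay y0 r - md * r^2 / 4) / D"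

lemma et_der:
  assumes r: "r \<in> {0..\<rho> y0+\<delta>}"
  shows "((\<lambda>y. et y r) has_real_derivative etd r) (at y0)"
proof -
  have r': "r \<in> {-\<delta>..\<rho> y0+\<delta>}" using r dpos by auto
  have "((\<lambda>y. A y r) has_real_derivative Ay y0 r) (at y0 within {y0-\<delta>..y0+\<delta>})"
    using A_der[OF _ r'] dpos by auto
  then have "((\<lambda>y. A y r) has_real_derivative Ay y0 r) (at y0)"
    using dpos by (subst (asm) at_within_interior) auto
  then have "((\<lambda>y. (A y r - m y * r^2 / 4) / D) has_real_derivative etd r) (at y0)"
    unfolding etd_def by (intro DERIV_cdivide DERIV_diff DERIV_cmult_right m_der)
  then show ?thesis
  proof (rule has_field_derivative_transform_within_open)
    show "open {y0-\<delta><..<y0+\<delta>}" by simp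
    show "y0 \<in> {y0-\<delta><..<y0+\<delta>}" using dpos by simp
    show "(A y r - m y * r^2 / 4) / D = et y r" if "y \<in> {y0-\<delta><..<y0+\<delta>}" for y
      using et_eq[of y r] that r by auto
  qed
qed

lemma et_cont: "continuous_on {0..\<rho> y0+\<delta>} (et y0)"
proof -
  have "continuous_on {0..\<rho> y0+\<delta>} (A y0)"
    using dpos by (intro cont_section[OF A_cont]) auto
  then have "continuous_on {0..\<rho> y0+\<delta>} (\<lambda>r. (A y0 r - m y0 * r^2 / 4) / D)"
    using Dpos by (auto intro!: continuous_intros)
  then show ?thesis
    by (rule continuous_on_eq) (use et_eq dpos in auto)
qed

lemma etd_cont: "continuous_on {0..\<rho> y0+\<delta>} etd"
proof -
  have "continuous_on {0..\<rho> y0+\<delta>} (Ay y0)"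
    using dpos by (intro cont_section[OF Ay_cont]) auto
  then show ?thesis unfolding etd_def using Dpos by (auto intro!: continuous_intros)
qed

end

context slice begin

lemma A_cont': "continuous_on ({y0-\<delta>..y0+\<delta>} \<times> {0..\<rho> y0+\<delta>}) (\<lambda>(y,r). A y r)"
  by (rule continuous_on_subset[OF A_cont box_sub])
lemma Ay_cont': "continuous_on ({y0-\<delta>..y0+\<delta>} \<times> {0..\<rho> y0+\<delta>}) (\<lambda>(y,r). Ay y r)"
  by (rule continuous_on_subset[OF Ay_cont box_sub])

lemma LM_et:
  fixes g gy :: "real \<Rightarrow> real \<Rightarrow> real"
  assumes gc: "continuous_on ({y0-\<delta>..y0+\<delta>} \<times> {0..\<rho> y0+\<delta>}) (\<lambda>(y,r). g y r)"
    and gyc: "continuous_on ({y0-\<delta>..y0+\<delta>} \<times> {0..\<rho> y0+\<delta>}) (\<lambda>(y,r). gy y r)"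
    and gd: "\<And>y r. y \<in> {y0-\<delta>..y0+\<delta>} \<Longrightarrow> r \<in> {0..\<rho> y0+\<delta>} \<Longrightarrow>
        ((\<lambda>y. g y r) has_real_derivative gy y r) (at y within {y0-\<delta>..y0+\<delta>})"
  shows "((\<lambda>y. integral {0..\<rho> y} (\<lambda>r. g y r * et y r)) has_real_derivative
     integral {0..\<rho> y0} (\<lambda>r. gy y0 r * et y0 r + g y0 r * etd r) + \<rho>' * (g y0 (\<rho> y0) * et y0 (\<rho> y0))) (at y0)"
proof -
  let ?B = "{y0-\<delta>..y0+\<delta>} \<times> {0..\<rho> y0+\<delta>}"
  let ?r0 = "\<rho> y0"
  define Q where "Q y = integral {0..\<rho> y} (\<lambda>r. g y r * A y r)" for y
  define T where "T y = integral {0..\<rho> y} (\<lambda>r. g y r * r^2)" for y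
  have Ad: "((\<lambda>y. A y r) has_real_derivative Ay y r) (at y within {y0-\<delta>..y0+\<delta>})"
    if "y \<in> {y0-\<delta>..y0+\<delta>}" "r \<in> {0..\<rho> y0+\<delta>}" for y r
    using A_der[of y r] that dpos by auto
  have Qd: "(Q has_real_derivative
      (integral {0..?r0} (\<lambda>r. gy y0 r * A y0 r + Ay y0 r * g y0 r) + \<rho>' * (g y0 ?r0 * A y0 ?r0))) (at y0)"
    unfolding Q_def
  proof (rule LM)
    show "continuous_on ?B (\<lambda>(y,r). g y r * A y r)"
      using gc A_cont' by (auto simp: split_beta' intro!: continuous_intros)
    show "continuous_on ?B (\<lambda>(y,r). gy y r * A y r + Ay y r * g y r)"
      using gc gyc A_cont' Ay_cont' by (auto simp: split_beta' intro!: continuous_intros)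
    show "((\<lambda>y. g y r * A y r) has_real_derivative gy y r * A y r + Ay y r * g y r) (at y within {y0-\<delta>..y0+\<delta>})"
      if "y \<in> {y0-\<delta>..y0+\<delta>}" "r \<in> {0..\<rho> y0+\<delta>}" for y r
      by (rule DERIV_mult[OF gd[OF that] Ad[OF that]])
  qed
  have Td: "(T has_real_derivative
      (integral {0..?r0} (\<lambda>r. gy y0 r * r^2) + \<rho>' * (g y0 ?r0 * ?r0^2))) (at y0)"
    unfolding T_def
  proof (rule LM)
    show "continuous_on ?B (\<lambda>(y,r). g y r * r^2)"
      using gc by (auto simp: split_beta' intro!: continuous_intros)
    show "continuous_on ?B (\<lambda>(y,r). gy y r * r^2)"
      using gyc by (auto simp: split_beta' intro!: continuous_intros)
    show "((\<lambda>y. g y r * r^2) has_real_derivative gy y r * r^2) (at y within {y0-\<delta>..y0+\<delta>})"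
      if "y \<in> {y0-\<delta>..y0+\<delta>}" "r \<in> {0..\<rho> y0+\<delta>}" for y r
      by (rule DERIV_cmult_right[OF gd[OF that]])
  qed
  have cg: "continuous_on {0..\<rho> y0+\<delta>} (g y)" if "y \<in> {y0-\<delta>..y0+\<delta>}" for y
    by (rule cont_section[OF gc that]) auto
  have cgy: "continuous_on {0..\<rho> y0+\<delta>} (gy y)" if "y \<in> {y0-\<delta>..y0+\<delta>}" for y
    by (rule cont_section[OF gyc that]) auto
  have cA: "continuous_on {0..\<rho> y0+\<delta>} (A y)" if "y \<in> {y0-\<delta>..y0+\<delta>}" for y
    by (rule cont_section[OF A_cont' that]) auto
  have cAy: "continuous_on {0..\<rho> y0+\<delta>} (Ay y)" if "y \<in> {y0-\<delta>..y0+\<delta>}" for y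
    by (rule cont_section[OF Ay_cont' that]) auto
  obtain e where e: "e > 0" "e \<le> \<delta>" "\<And>y. y \<in> ball y0 e \<Longrightarrow> \<rho> y < \<rho> y0 + \<delta>"
    using near by blast
  have eq: "integral {0..\<rho> y} (\<lambda>r. g y r * et y r) = (1/D) * Q y + (- m y / (4*D)) * T y"
    if y: "y \<in> ball y0 e" for y
  proof -
    have yY: "y \<in> {y0-\<delta>..y0+\<delta>}" using y e by (auto simp: dist_real_def)
    have sub: "{0..\<rho> y} \<subseteq> {0..\<rho> y0+\<delta>}" using e(3)[OF y] by auto
    have "integral {0..\<rho> y} (\<lambda>r. g y r * et y r) =
        (1/D) * integral {0..\<rho> y} (\<lambda>r. g y r * A y r) + (- m y / (4*D)) * integral {0..\<rho> y} (\<lambda>r. g y r * r^2)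
        + 0 * integral {0..\<rho> y} (\<lambda>r. 0)"
    proof (rule lin3)
      show "(\<lambda>r. g y r * A y r) integrable_on {0..\<rho> y}"
        using cg[OF yY] cA[OF yY] sub
        by (intro integrable_continuous_real continuous_intros) (auto intro: continuous_on_subset)
      show "(\<lambda>r. g y r * r^2) integrable_on {0..\<rho> y}"
        using cg[OF yY] sub
        by (intro integrable_continuous_real continuous_intros) (auto intro: continuous_on_subset)
      show "(\<lambda>r. 0::real) integrable_on {0..\<rho> y}" by (rule integrable_0)
      show "g y r * et y r = 1 / D * (g y r * A y r) + - m y / (4 * D) * (g y r * r\<^sup>2) + 0 * 0"
        if "r \<in> {0..\<rho> y}" for r
      proof -
        have "r \<in> {0..\<rho> y0+\<delta>}" using that sub by auto
        then show ?thesis using Dpos by (simp add: et_eq[OF yY] field_simps)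
      qed
    qed
    then show ?thesis by (simp add: Q_def T_def)
  qed
  have "((\<lambda>y. (1/D) * Q y + (- m y / (4*D)) * T y) has_real_derivative
      (1/D) * (integral {0..?r0} (\<lambda>r. gy y0 r * A y0 r + Ay y0 r * g y0 r) + \<rho>' * (g y0 ?r0 * A y0 ?r0))
      + ((- md / (4*D)) * T y0 + (integral {0..?r0} (\<lambda>r. gy y0 r * r^2) + \<rho>' * (g y0 ?r0 * ?r0^2)) * (- m y0 / (4*D)))) (at y0)"
    by (intro DERIV_add DERIV_cmult Qd DERIV_mult Td DERIV_cdivide DERIV_minus m_der)
  then have D1: "((\<lambda>y. integral {0..\<rho> y} (\<lambda>r. g y r * et y r)) has_real_derivative
      (1/D) * (integral {0..?r0} (\<lambda>r. gy y0 r * A y0 r + Ay y0 r * g y0 r) + \<rho>' * (g y0 ?r0 * A y0 ?r0))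
      + ((- md / (4*D)) * T y0 + (integral {0..?r0} (\<lambda>r. gy y0 r * r^2) + \<rho>' * (g y0 ?r0 * ?r0^2)) * (- m y0 / (4*D)))) (at y0)"
    by (rule has_field_derivative_transform_within_open[where S="ball y0 e"]) (use e eq in auto)
  have sub0: "{0..?r0} \<subseteq> {0..\<rho> y0+\<delta>}" using dpos by auto
  have y0Y: "y0 \<in> {y0-\<delta>..y0+\<delta>}" using dpos by auto
  have Iint: "integral {0..?r0} (\<lambda>r. gy y0 r * et y0 r + g y0 r * etd r)
      = (1/D) * integral {0..?r0} (\<lambda>r. gy y0 r * A y0 r + Ay y0 r * g y0 r)
        + (- m y0 / (4*D)) * integral {0..?r0} (\<lambda>r. gy y0 r * r^2)
        + (- md / (4*D)) * integral {0..?r0} (\<lambda>r. g y0 r * r^2)"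
  proof (rule lin3)
    show "(\<lambda>r. gy y0 r * A y0 r + Ay y0 r * g y0 r) integrable_on {0..?r0}"
      using cg[OF y0Y] cgy[OF y0Y] cA[OF y0Y] cAy[OF y0Y] sub0
      by (intro integrable_continuous_real continuous_intros) (auto intro: continuous_on_subset)
    show "(\<lambda>r. gy y0 r * r^2) integrable_on {0..?r0}"
      using cgy[OF y0Y] sub0
      by (intro integrable_continuous_real continuous_intros) (auto intro: continuous_on_subset)
    show "(\<lambda>r. g y0 r * r^2) integrable_on {0..?r0}"
      using cg[OF y0Y] sub0
      by (intro integrable_continuous_real continuous_intros) (auto intro: continuous_on_subset)
    show "gy y0 r * et y0 r + g y0 r * etd r =
        1 / D * (gy y0 r * A y0 r + Ay y0 r * g y0 r) + - m y0 / (4 * D) * (gy y0 r * r\<^sup>2) + - md / (4 * D) * (g y0 r * r\<^sup>2)"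
      if "r \<in> {0..?r0}" for r
    proof -
      have "r \<in> {0..\<rho> y0+\<delta>}" using that sub0 by auto
      then show ?thesis using Dpos by (simp add: et_eq[OF y0Y] etd_def field_simps)
    qed
  qed
  have Ev: "et y0 ?r0 = (A y0 ?r0 - m y0 * ?r0^2 / 4) / D"
    using et_eq[OF y0Y, of ?r0] sub0 rpos[of y0] by auto
  have val: "(1/D) * (integral {0..?r0} (\<lambda>r. gy y0 r * A y0 r + Ay y0 r * g y0 r) + \<rho>' * (g y0 ?r0 * A y0 ?r0))
      + ((- md / (4*D)) * T y0 + (integral {0..?r0} (\<lambda>r. gy y0 r * r^2) + \<rho>' * (g y0 ?r0 * ?r0^2)) * (- m y0 / (4*D)))
      = integral {0..\<rho> y0} (\<lambda>r. gy y0 r * et y0 r + g y0 r * etd r) + \<rho>' * (g y0 (\<rho> y0) * et y0 (\<rho> y0))"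
    unfolding Iint Ev T_def using Dpos by (simp add: field_simps)
  show ?thesis using D1 unfolding val .
qed

lemma et_cont_y:
  assumes y: "y \<in> {y0-\<delta>..y0+\<delta>}"
  shows "continuous_on {0..\<rho> y0+\<delta>} (et y)"
proof -
  have "continuous_on {0..\<rho> y0+\<delta>} (A y)"
    using dpos by (intro cont_section[OF A_cont y]) auto
  then have "continuous_on {0..\<rho> y0+\<delta>} (\<lambda>r. (A y r - m y * r^2 / 4) / D)"
    using Dpos by (auto intro!: continuous_intros)
  then show ?thesis
    by (rule continuous_on_eq) (use et_eq[OF y] in auto)
qed

lemma et_rder:
  assumes r: "r \<in> {0<..<\<rho> y0+\<delta>}"
  shows "((\<lambda>s. et y0 s) has_real_derivative (r * I y0 r - m y0 * r / 2) / D) (at r)"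
proof -
  define inn where "inn z = (1/z) * integral {0..z} (\<lambda>s. (v y0 s - m y0) * s)" for z
  have y0Y: "y0 \<in> {y0-\<delta>..y0+\<delta>}" using dpos by auto
  have cI: "continuous_on {0..\<rho> y0+\<delta>} (I y0)"
    using dpos by (intro cont_section[OF I_cont y0Y]) auto
  have "continuous_on {0..\<rho> y0+\<delta>} (\<lambda>z. z * I y0 z - m y0 * z / 2)"
    by (auto intro!: continuous_intros cI)
  then have ci: "continuous_on {0..\<rho> y0+\<delta>} inn"
    by (rule continuous_on_eq) (use inner_eq[OF y0Y] in \<open>auto simp: inn_def\<close>)
  have "((\<lambda>s. integral {0..s} inn) has_real_derivative inn r) (at r within {0..\<rho> y0+\<delta>})"
    using r by (intro integral_has_real_derivative ci) auto
  then have "((\<lambda>s. integral {0..s} inn) has_real_derivative inn r) (at r)"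
    using r by (subst (asm) at_within_interior) auto
  then have "((\<lambda>s. (1/D) * integral {0..s} inn) has_real_derivative (1/D) * inn r) (at r)"
    by (rule DERIV_cmult)
  moreover have "inn r = r * I y0 r - m y0 * r / 2"
    unfolding inn_def using inner_eq[OF y0Y, of r] r by auto
  moreover have "(\<lambda>s. (1/D) * integral {0..s} inn) = et y0"
    by (rule ext) (simp add: et_def inn_def[abs_def])
  ultimately show ?thesis by simp
qed

end

lemma deriv_avg:
  fixes \<rho> P :: "real \<Rightarrow> real"
  assumes "(\<rho> has_real_derivative \<rho>') (at y)" "(P has_real_derivative P') (at y)" "\<rho> y \<noteq> 0"
  shows "((\<lambda>y. 2 / (\<rho> y)^2 * P y) has_real_derivative (-(4*\<rho>'/(\<rho> y)^3) * P y + 2/(\<rho> y)^2 * P')) (at y)"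
proof -
  have sq: "((\<lambda>x. (\<rho> x)^2) has_real_derivative 2 * \<rho> y * \<rho>') (at y)"
    using DERIV_power[OF assms(1), of 2] by (simp add: power2_eq_square mult_ac)
  have "((\<lambda>y. 2 / (\<rho> y)^2 * P y) has_real_derivative
      ((0 * (\<rho> y)^2 - 2 * (2 * \<rho> y * \<rho>')) / ((\<rho> y)^2 * (\<rho> y)^2)) * P y + P' * (2 / (\<rho> y)^2)) (at y)"
    using assms(3) by (intro DERIV_mult DERIV_divide DERIV_const sq assms(2)) auto
  moreover have "((0 * (\<rho> y)^2 - 2 * (2 * \<rho> y * \<rho>')) / ((\<rho> y)^2 * (\<rho> y)^2)) * P y + P' * (2 / (\<rho> y)^2)
      = (-(4*\<rho>'/(\<rho> y)^3) * P y + 2/(\<rho> y)^2 * P')"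
    using assms(3) by (simp add: field_simps power2_eq_square power3_eq_cube)
  ultimately show ?thesis by simp
qed

theorem mainTheorem2:
  fixes R C G2 :: "real \<Rightarrow> real \<Rightarrow> real"
    and Vx Vr W2 :: "real \<Rightarrow> real \<Rightarrow> real \<Rightarrow> real"
    and D :: real
  defines "\<Omega> \<equiv> {(x, r, t). 0 \<le> r \<and> r \<le> R x t}"
    and "etat \<equiv> (\<lambda>x r t. eta D R Vx x r t - ravg R (eta D R Vx) x t)"
    and "Vxt \<equiv> (\<lambda>x r t. Vx x r t - ravg R Vx x t)"
  assumes Rpos: "\<And>x t. R x t > 0"
    and Rsmooth: "smooth_on (\<lambda>(x, t). R x t) UNIV"
    and Vxsmooth: "smooth_near (\<lambda>(x, r, t). Vx x r t) \<Omega>"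
    and Vrsmooth: "smooth_near (\<lambda>(x, r, t). Vr x r t) \<Omega>"
    and incompressible:
      "\<And>x r t. 0 \<le> r \<Longrightarrow> r \<le> R x t \<Longrightarrow>
         pdr (\<lambda>x r t. r * Vr x r t) x r t + r * pdx Vx x r t = 0"
    and streamline:
      "\<And>x t. pdt2 R x t + Vx x (R x t) t * pdx2 R x t = Vr x (R x t) t"
    and Dpos: "D > 0"
    and Csmooth: "smooth_on (\<lambda>(x, t). C x t) UNIV"
    and W2smooth: "smooth_near (\<lambda>(x, r, t). W2 x r t) \<Omega>"
    and W2axis: "\<And>x t. ((\<lambda>r. r * pdr W2 x r t) \<longlongrightarrow> 0) (at_right 0)"
    and W2wall: "\<And>x t. pdr W2 x (R x t) t = 0"
    and W2eq:
      "\<And>x r t. 0 < r \<Longrightarrow> r \<le> R x t \<Longrightarrow>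
         Lop D W2 x r t =
           pdt (\<lambda>x r t. pdx2 C x t * etat x r t) x r t
           + G2 x t
           - etat x r t * pdx2 (\<lambda>x t. pdx2 C x t * ravg R Vx x t) x t
           + Vx x r t * pdx (\<lambda>x r t. pdx2 C x t * etat x r t) x r t
           + Vr x r t * pdx2 C x t * pdr etat x r t"
  shows "\<And>x t. G2 x t =
           - (1 / (R x t)^2) *
             pdx2 (\<lambda>x t. pdx2 C x t *
                      ravg R (\<lambda>x r t. (R x t)^2 * eta D R Vx x r t * Vxt x r t) x t) x t"
proof -
  fix x0 t0
  define R0 where "R0 = R x0 t0"
  have R0pos: "R0 > 0" using Rpos by (simp add: R0_def)
  have Om: "(x0, r, t0) \<in> \<Omega>" if "0 \<le> r" "r \<le> R0" for r
    using that by (simp add: \<Omega>_def R0_def)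
  obtain UV where UV: "open UV" "\<Omega> \<subseteq> UV" "smooth_on (\<lambda>(x,r,t). Vx x r t) UV"
    using Vxsmooth unfolding smooth_near_def by blast
  obtain UR where UR: "open UR" "\<Omega> \<subseteq> UR" "smooth_on (\<lambda>(x,r,t). Vr x r t) UR"
    using Vrsmooth unfolding smooth_near_def by blast
  obtain UW where UW: "open UW" "\<Omega> \<subseteq> UW" "smooth_on (\<lambda>(x,r,t). W2 x r t) UW"
    using W2smooth unfolding smooth_near_def by blast
  define FV where "FV = (\<lambda>(x,r,t). Vx x r t)"
  define FVd where "FVd v p = frechet_derivative FV (at p) v" for v p
  define K where "K = (\<lambda>r. (x0, r, t0)) ` {0..R0}"
  have Kc: "compact K" unfolding K_def
    by (intro compact_continuous_image continuous_intros) auto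
  have KU: "K \<subseteq> UV" using Om UV(2) by (auto simp: K_def)
  obtain \<epsilon> where eps: "\<epsilon> > 0" "(\<Union>p\<in>K. ball p \<epsilon>) \<subseteq> UV"
    using compact_subset_open_imp_ball_epsilon_subset[OF Kc UV(1) KU] by blast
  define \<delta> where "\<delta> = \<epsilon> / 4"
  have dpos: "\<delta> > 0" using eps by (simp add: \<delta>_def)
  have tube: "(y, r, s) \<in> UV" if "\<bar>y - x0\<bar> \<le> \<delta>" "r \<in> {-\<delta>..R0+\<delta>}" "\<bar>s - t0\<bar> \<le> \<delta>" for y r s
  proof -
    define r' where "r' = max 0 (min R0 r)"
    have "(x0, r', t0) \<in> K" using R0pos by (auto simp: K_def r'_def)
    have "\<bar>r - r'\<bar> \<le> \<delta>" using that(2) R0pos dpos unfolding r'_def by (simp add: max_def min_def abs_if)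
    have "dist (x0, r', t0) (y, r, s) \<le> \<bar>x0 - y\<bar> + \<bar>r' - r\<bar> + \<bar>t0 - s\<bar>" by (rule dist3_le)
    also have "\<dots> < \<epsilon>" using that \<open>\<bar>r - r'\<bar> \<le> \<delta>\<close> eps by (simp add: \<delta>_def abs_minus_commute)
    finally have "(y, r, s) \<in> ball (x0, r', t0) \<epsilon>" by (simp add: mem_ball)
    then show ?thesis using eps(2) \<open>(x0, r', t0) \<in> K\<close> by blast
  qed
  have FVdiff: "FV differentiable (at p)" if "p \<in> UV" for p
    using smooth_on_diff[OF UV(3) that] by (simp add: FV_def)
  have FVc: "continuous_on UV FV" using smooth_on_cont[OF UV(3) UV(1)] by (simp add: FV_def)
  have FVdc: "continuous_on UV (FVd v)" if "v \<in> Basis" for v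
    using smooth_on_pd_cont[OF UV(3) UV(1) that] unfolding FVd_def FV_def by simp
  have Vx_dx: "((\<lambda>y. Vx y r t) has_real_derivative FVd e1 (x,r,t)) (at x)" if "(x,r,t) \<in> UV" for x r t
    using pd3_1[of Vx x r t] FVdiff[OF that] by (simp add: FVd_def FV_def)
  have Vx_dt: "((\<lambda>s. Vx x r s) has_real_derivative FVd e3 (x,r,t)) (at t)" if "(x,r,t) \<in> UV" for x r t
    using pd3_3[of Vx x r t] FVdiff[OF that] by (simp add: FVd_def FV_def)
  define FR where "FR = (\<lambda>(x,t). R x t)"
  have FRdiff: "FR differentiable (at p)" for p
    using smooth_on_diff[OF Rsmooth] by (simp add: FR_def)
  define Rx where "Rx = frechet_derivative FR (at (x0,t0)) f1"
  define Rt where "Rt = frechet_derivative FR (at (x0,t0)) f2"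
  have Rx_der: "((\<lambda>y. R y t0) has_real_derivative Rx) (at x0)"
    using pd2_1[of R x0 t0] FRdiff by (simp add: Rx_def FR_def)
  have Rt_der: "((\<lambda>s. R x0 s) has_real_derivative Rt) (at t0)"
    using pd2_2[of R x0 t0] FRdiff by (simp add: Rt_def FR_def)
  have Rx_eq: "pdx2 R x0 t0 = Rx" unfolding pdx2_def by (rule DERIV_imp_deriv[OF Rx_der])
  have Rt_eq: "pdt2 R x0 t0 = Rt" unfolding pdt2_def by (rule DERIV_imp_deriv[OF Rt_der])
  interpret X: slice "\<lambda>y r. Vx y r t0" "\<lambda>y r. FVd e1 (y, r, t0)" "\<lambda>y. R y t0" Rx x0 \<delta> D
  proof unfold_locales
    show "\<delta> > 0" by (rule dpos)
    show "D > 0" by (rule Dpos)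
    show "R y t0 > 0" for y by (rule Rpos)
    show "((\<lambda>y. R y t0) has_real_derivative Rx) (at x0)" by (rule Rx_der)
    have sub: "(\<lambda>p. (fst p, snd p, t0)) ` ({x0-\<delta>..x0+\<delta>} \<times> {-\<delta>..R x0 t0+\<delta>}) \<subseteq> UV"
      using tube dpos by (auto simp: R0_def abs_le_iff)
    have "continuous_on ({x0-\<delta>..x0+\<delta>} \<times> {-\<delta>..R x0 t0+\<delta>}) (\<lambda>p. FV (fst p, snd p, t0))"
      by (rule continuous_on_compose2[OF FVc _ sub]) (intro continuous_intros)
    then show "continuous_on ({x0-\<delta>..x0+\<delta>} \<times> {-\<delta>..R x0 t0+\<delta>}) (\<lambda>(y,r). Vx y r t0)"
      by (simp add: FV_def split_beta')
    have "continuous_on ({x0-\<delta>..x0+\<delta>} \<times> {-\<delta>..R x0 t0+\<delta>}) (\<lambda>p. FVd e1 (fst p, snd p, t0))"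
      by (rule continuous_on_compose2[OF FVdc[OF e_Basis(1)] _ sub]) (intro continuous_intros)
    then show "continuous_on ({x0-\<delta>..x0+\<delta>} \<times> {-\<delta>..R x0 t0+\<delta>}) (\<lambda>(y,r). FVd e1 (y, r, t0))"
      by (simp add: split_beta')
    show "((\<lambda>y. Vx y r t0) has_real_derivative FVd e1 (y, r, t0)) (at y within {x0-\<delta>..x0+\<delta>})"
      if "y \<in> {x0-\<delta>..x0+\<delta>}" "r \<in> {-\<delta>..R x0 t0+\<delta>}" for y r
      using Vx_dx[of y r t0] tube[of y r t0] that dpos
      by (auto simp: R0_def abs_le_iff intro: has_field_derivative_at_within)
  qed
  interpret T: slice "\<lambda>s r. Vx x0 r s" "\<lambda>s r. FVd e3 (x0, r, s)" "\<lambda>s. R x0 s" Rt t0 \<delta> D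
  proof unfold_locales
    show "\<delta> > 0" by (rule dpos)
    show "D > 0" by (rule Dpos)
    show "R x0 y > 0" for y by (rule Rpos)
    show "((\<lambda>s. R x0 s) has_real_derivative Rt) (at t0)" by (rule Rt_der)
    have sub: "(\<lambda>p. (x0, snd p, fst p)) ` ({t0-\<delta>..t0+\<delta>} \<times> {-\<delta>..R x0 t0+\<delta>}) \<subseteq> UV"
      using tube dpos by (auto simp: R0_def abs_le_iff)
    have "continuous_on ({t0-\<delta>..t0+\<delta>} \<times> {-\<delta>..R x0 t0+\<delta>}) (\<lambda>p. FV (x0, snd p, fst p))"
      by (rule continuous_on_compose2[OF FVc _ sub]) (intro continuous_intros)
    then show "continuous_on ({t0-\<delta>..t0+\<delta>} \<times> {-\<delta>..R x0 t0+\<delta>}) (\<lambda>(s,r). Vx x0 r s)"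
      by (simp add: FV_def split_beta')
    have "continuous_on ({t0-\<delta>..t0+\<delta>} \<times> {-\<delta>..R x0 t0+\<delta>}) (\<lambda>p. FVd e3 (x0, snd p, fst p))"
      by (rule continuous_on_compose2[OF FVdc[OF e_Basis(3)] _ sub]) (intro continuous_intros)
    then show "continuous_on ({t0-\<delta>..t0+\<delta>} \<times> {-\<delta>..R x0 t0+\<delta>}) (\<lambda>(s,r). FVd e3 (x0, r, s))"
      by (simp add: split_beta')
    show "((\<lambda>s. Vx x0 r s) has_real_derivative FVd e3 (x0, r, y)) (at y within {t0-\<delta>..t0+\<delta>})"
      if "y \<in> {t0-\<delta>..t0+\<delta>}" "r \<in> {-\<delta>..R x0 t0+\<delta>}" for y r
      using Vx_dt[of x0 r y] tube[of x0 r y] that dpos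
      by (auto simp: R0_def abs_le_iff intro: has_field_derivative_at_within)
  qed
  have etaX: "eta D R Vx y r t0 = X.et y r" for y r
    by (simp add: eta_def X.et_def X.m_def ravg_def)
  have etaT: "eta D R Vx x0 r s = T.et s r" for s r
    by (simp add: eta_def T.et_def T.m_def ravg_def)
  have mX: "ravg R Vx y t0 = X.m y" for y
    by (simp add: X.m_def ravg_def)
  have etaXT: "X.et x0 r = T.et t0 r" for r using etaX etaT by metis
  define E where "E x t = ravg R (eta D R Vx) x t" for x t
  define PX where "PX y = integral {0..R y t0} (\<lambda>r. X.et y r * r)" for y
  define PT where "PT s = integral {0..R x0 s} (\<lambda>r. T.et s r * r)" for s
  have EX: "E y t0 = 2 / (R y t0)^2 * PX y" for y
    by (simp add: E_def PX_def ravg_def etaX)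
  have ET: "E x0 s = 2 / (R x0 s)^2 * PT s" for s
    by (simp add: E_def PT_def ravg_def etaT)
  define E0 where "E0 = E x0 t0"
  define m0 where "m0 = X.m x0"
  have cr: "continuous_on ({a..b} \<times> {c..d}) (\<lambda>(y::real,r::real). r)" for a b c d
    by (simp add: split_beta' continuous_intros)
  have c0: "continuous_on ({a..b} \<times> {c..d}) (\<lambda>(y::real,r::real). 0::real)" for a b c d
    by (simp add: split_beta' continuous_intros)
  define PXd where "PXd = integral {0..R0} (\<lambda>r. 0 * X.et x0 r + r * X.etd r) + Rx * (R0 * X.et x0 R0)"
  have PX_der: "(PX has_real_derivative PXd) (at x0)"
  proof -
    have "((\<lambda>y. integral {0..R y t0} (\<lambda>r. r * X.et y r)) has_real_derivative PXd) (at x0)"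
      unfolding PXd_def R0_def by (rule X.LM_et[OF cr c0]) auto
    moreover have "(\<lambda>y. integral {0..R y t0} (\<lambda>r. r * X.et y r)) = PX"
      by (rule ext) (simp add: PX_def mult.commute)
    ultimately show ?thesis by simp
  qed
  define PTd where "PTd = integral {0..R0} (\<lambda>r. 0 * T.et t0 r + r * T.etd r) + Rt * (R0 * T.et t0 R0)"
  have PT_der: "(PT has_real_derivative PTd) (at t0)"
  proof -
    have "((\<lambda>s. integral {0..R x0 s} (\<lambda>r. r * T.et s r)) has_real_derivative PTd) (at t0)"
      unfolding PTd_def R0_def by (rule T.LM_et[OF cr c0]) auto
    moreover have "(\<lambda>s. integral {0..R x0 s} (\<lambda>r. r * T.et s r)) = PT"
      by (rule ext) (simp add: PT_def mult.commute)
    ultimately show ?thesis by simp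
  qed
  define Ex where "Ex = -(4*Rx/R0^3) * PX x0 + 2/R0^2 * PXd"
  define Et where "Et = -(4*Rt/R0^3) * PT t0 + 2/R0^2 * PTd"
  have Ex_der: "((\<lambda>y. E y t0) has_real_derivative Ex) (at x0)"
    unfolding EX Ex_def R0_def by (rule deriv_avg[OF Rx_der PX_der]) (use Rpos in \<open>simp add: less_imp_neq[symmetric]\<close>)
  have Et_der: "((\<lambda>s. E x0 s) has_real_derivative Et) (at t0)"
    unfolding ET Et_def R0_def by (rule deriv_avg[OF Rt_der PT_der]) (use Rpos in \<open>simp add: less_imp_neq[symmetric]\<close>)
  define FC where "FC = (\<lambda>(x,t). C x t)"
  define Cd where "Cd p = frechet_derivative FC (at p) f1" for p
  have FCdiff: "FC differentiable (at p)" for p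
    using smooth_on_diff[OF Csmooth] by (simp add: FC_def)
  have a_eq: "pdx2 C y t = Cd (y,t)" for y t
    unfolding pdx2_def Cd_def by (rule DERIV_imp_deriv) (use pd2_1[of C y t] FCdiff in \<open>simp add: FC_def\<close>)
  have Cd_diff: "Cd differentiable (at p)" for p
    using smooth_on_pd_diff[OF Csmooth _ e_Basis(4)] unfolding Cd_def FC_def by simp
  have Cd_diff': "(\<lambda>(x,t). Cd (x,t)) differentiable (at p)" for p
    using Cd_diff by simp
  define ax where "ax = frechet_derivative (\<lambda>(x,t). Cd (x,t)) (at (x0,t0)) f1"
  define aT where "aT = frechet_derivative (\<lambda>(x,t). Cd (x,t)) (at (x0,t0)) f2"
  define a0 where "a0 = pdx2 C x0 t0"
  have a_dx: "((\<lambda>y. pdx2 C y t0) has_real_derivative ax) (at x0)"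
    unfolding a_eq ax_def by (rule pd2_1[OF Cd_diff'])
  have a_dt: "((\<lambda>s. pdx2 C x0 s) has_real_derivative aT) (at t0)"
    unfolding a_eq aT_def by (rule pd2_2[OF Cd_diff'])
  have etat_X: "etat y r t0 = X.et y r - E y t0" for y r
    by (simp add: etat_def etaX E_def)
  have etat_T: "etat x0 r s = T.et s r - E x0 s" for s r
    by (simp add: etat_def etaT E_def)
  have pdt_eq: "pdt (\<lambda>x r t. pdx2 C x t * etat x r t) x0 r t0 = aT * (X.et x0 r - E0) + a0 * (T.etd r - Et)"
    if r: "r \<in> {0..R0+\<delta>}" for r
  proof -
    have "((\<lambda>s. pdx2 C x0 s * (T.et s r - E x0 s)) has_real_derivative
        aT * (T.et t0 r - E x0 t0) + (T.etd r - Et) * pdx2 C x0 t0) (at t0)"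
      using r by (intro DERIV_mult a_dt DERIV_diff T.et_der Et_der) (simp add: R0_def)
    moreover have "aT * (T.et t0 r - E x0 t0) + (T.etd r - Et) * pdx2 C x0 t0 = aT * (X.et x0 r - E0) + a0 * (T.etd r - Et)"
      by (simp add: etaXT E0_def a0_def)
    ultimately have "((\<lambda>s. pdx2 C x0 s * (T.et s r - E x0 s)) has_real_derivative
        aT * (X.et x0 r - E0) + a0 * (T.etd r - Et)) (at t0)" by simp
    then show ?thesis unfolding pdt_def etat_T by (rule DERIV_imp_deriv)
  qed
  have pdx_eq: "pdx (\<lambda>x r t. pdx2 C x t * etat x r t) x0 r t0 = ax * (X.et x0 r - E0) + a0 * (X.etd r - Ex)"
    if r: "r \<in> {0..R0+\<delta>}" for r
  proof -
    have "((\<lambda>y. pdx2 C y t0 * (X.et y r - E y t0)) has_real_derivative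
        ax * (X.et x0 r - E x0 t0) + (X.etd r - Ex) * pdx2 C x0 t0) (at x0)"
      using r by (intro DERIV_mult a_dx DERIV_diff X.et_der Ex_der) (simp add: R0_def)
    moreover have "ax * (X.et x0 r - E x0 t0) + (X.etd r - Ex) * pdx2 C x0 t0 = ax * (X.et x0 r - E0) + a0 * (X.etd r - Ex)"
      by (simp add: E0_def a0_def)
    ultimately have "((\<lambda>y. pdx2 C y t0 * (X.et y r - E y t0)) has_real_derivative
        ax * (X.et x0 r - E0) + a0 * (X.etd r - Ex)) (at x0)" by simp
    then show ?thesis unfolding pdx_def etat_X by (rule DERIV_imp_deriv)
  qed
  have pdr_eq: "pdr etat x0 r t0 = (r * X.I x0 r - m0 * r / 2) / D"
    if r: "r \<in> {0<..<R0+\<delta>}" for r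
  proof -
    have "((\<lambda>s. X.et x0 s - E x0 t0) has_real_derivative (r * X.I x0 r - m0 * r / 2) / D - 0) (at r)"
    proof (rule DERIV_diff[OF _ DERIV_const])
      show "((\<lambda>s. X.et x0 s) has_real_derivative (r * X.I x0 r - m0 * r / 2) / D) (at r)"
        unfolding m0_def by (rule X.et_rder) (use r in \<open>simp add: R0_def\<close>)
    qed
    then have "((\<lambda>s. X.et x0 s - E x0 t0) has_real_derivative (r * X.I x0 r - m0 * r / 2) / D) (at r)"
      by simp
    then show ?thesis unfolding pdr_def etat_X by (rule DERIV_imp_deriv)
  qed
  have pdxV: "pdx Vx x0 r t0 = FVd e1 (x0, r, t0)" if "r \<in> {0..R0}" for r
    unfolding pdx_def by (rule DERIV_imp_deriv[OF Vx_dx]) (use Om UV(2) that in auto)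
  define FW where "FW = (\<lambda>(x,r,t). W2 x r t)"
  define W1 where "W1 p = frechet_derivative FW (at p) e2" for p
  define W11 where "W11 p = frechet_derivative W1 (at p) e2" for p
  have OmW: "(x0, r, t0) \<in> UW" if "r \<in> {0..R0}" for r using Om UW(2) that by auto
  have W1c: "continuous_on UW W1"
    using smooth_on_pd_cont[OF UW(3) UW(1) e_Basis(2)] unfolding W1_def FW_def by simp
  have W1eta: "(\<lambda>(x,r,t). W1 (x,r,t)) = W1" by (rule ext) auto
  have W1diff: "(\<lambda>(x,r,t). W1 (x,r,t)) differentiable (at p)" if "p \<in> UW" for p
  proof -
    have "W1 differentiable (at p)"
      using smooth_on_pd_diff[OF UW(3) that e_Basis(2)] unfolding W1_def FW_def by simp
    then show ?thesis by (simp only: W1eta)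
  qed
  have pdrW: "pdr W2 x r t = W1 (x,r,t)" if "(x,r,t) \<in> UW" for x r t
    unfolding pdr_def W1_def
    by (rule DERIV_imp_deriv) (use pd3_2[of W2 x r t] smooth_on_diff[OF UW(3) that] in \<open>simp add: FW_def\<close>)
  have openW: "open ((\<lambda>s. (x0, s, t0)) -` UW)"
    by (rule continuous_open_vimage[OF UW(1)]) (intro allI continuous_intros)
  have W1_dr: "((\<lambda>s. pdr W2 x0 s t0) has_real_derivative W11 (x0, r, t0)) (at r)" if r: "r \<in> {0..R0}" for r
  proof -
    have "((\<lambda>s. W1 (x0, s, t0)) has_real_derivative W11 (x0, r, t0)) (at r)"
      using pd3_2[of "\<lambda>x r t. W1 (x,r,t)" x0 r t0] W1diff[OF OmW[OF r]] by (simp add: W11_def)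
    then show ?thesis
      by (rule has_field_derivative_transform_within_open[OF _ openW])
         (use OmW[OF r] pdrW in auto)
  qed
  define Qc where "Qc = pdx2 (\<lambda>x t. pdx2 C x t * ravg R Vx x t) x0 t0"
  define ETA where "ETA r = X.et x0 r" for r
  define RHS where "RHS r = aT * (ETA r - E0) + a0 * (T.etd r - Et) + G2 x0 t0 - (ETA r - E0) * Qc
      + Vx x0 r t0 * (ax * (ETA r - E0) + a0 * (X.etd r - Ex))
      + Vr x0 r t0 * a0 * ((r * X.I x0 r - m0 * r / 2) / D)" for r
  have Lop_eq: "Lop D W2 x0 r t0 = RHS r" if r: "r \<in> {0<..<R0}" for r
  proof -
    have r1: "r \<in> {0..R0+\<delta>}" "r \<in> {0<..<R0+\<delta>}" using r dpos by auto
    have "Lop D W2 x0 r t0 =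
           pdt (\<lambda>x r t. pdx2 C x t * etat x r t) x0 r t0
           + G2 x0 t0
           - etat x0 r t0 * pdx2 (\<lambda>x t. pdx2 C x t * ravg R Vx x t) x0 t0
           + Vx x0 r t0 * pdx (\<lambda>x r t. pdx2 C x t * etat x r t) x0 r t0
           + Vr x0 r t0 * pdx2 C x0 t0 * pdr etat x0 r t0"
      using W2eq[of r x0 t0] r by (simp add: R0_def)
    also have "\<dots> = RHS r"
      unfolding pdt_eq[OF r1(1)] pdx_eq[OF r1(1)] pdr_eq[OF r1(2)] etat_X RHS_def ETA_def Qc_def a0_def E0_def
      by simp
    finally show ?thesis .
  qed
  have FTC: "((\<lambda>r. r * RHS r / D) has_integral 0) {0..R0}"
  proof -
    have "((\<lambda>r. r * RHS r / D) has_integral (R0 * pdr W2 x0 R0 t0 - 0 * pdr W2 x0 0 t0)) {0..R0}"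
    proof (rule fundamental_theorem_of_calculus_interior[where f="\<lambda>r. r * pdr W2 x0 r t0"])
      show "0 \<le> R0" using R0pos by simp
      have "continuous_on {0..R0} (\<lambda>r. r * W1 (x0, r, t0))"
        by (intro continuous_intros continuous_on_compose2[OF W1c]) (use OmW in auto)
      then show "continuous_on {0..R0} (\<lambda>r. r * pdr W2 x0 r t0)"
        by (rule continuous_on_eq) (use OmW pdrW in auto)
      fix r assume r: "r \<in> {0<..<R0}"
      then have rr: "r \<in> {0..R0}" by auto
      have "((\<lambda>r. r * pdr W2 x0 r t0) has_real_derivative 1 * pdr W2 x0 r t0 + W11 (x0, r, t0) * r) (at r)"
        by (intro DERIV_mult DERIV_ident W1_dr[OF rr])
      moreover have "pdr (pdr W2) x0 r t0 = W11 (x0, r, t0)"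
        unfolding pdr_def[of "pdr W2"] by (rule DERIV_imp_deriv[OF W1_dr[OF rr]])
      moreover have "Lop D W2 x0 r t0 = D * (pdr (pdr W2) x0 r t0 + (1 / r) * pdr W2 x0 r t0)"
        by (simp add: Lop_def)
      moreover have "r * RHS r / D = 1 * pdr W2 x0 r t0 + W11 (x0, r, t0) * r"
        unfolding Lop_eq[OF r, symmetric] Lop_def \<open>pdr (pdr W2) x0 r t0 = W11 (x0, r, t0)\<close>
        using r Dpos by (simp add: field_simps)
      ultimately have "((\<lambda>r. r * pdr W2 x0 r t0) has_real_derivative r * RHS r / D) (at r)"
        by simp
      then show "((\<lambda>r. r * pdr W2 x0 r t0) has_vector_derivative r * RHS r / D) (at r)"
        by (simp add: has_real_derivative_iff_has_vector_derivative)
    qed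
    moreover have "pdr W2 x0 R0 t0 = 0" using W2wall[of x0 t0] by (simp add: R0_def)
    ultimately show ?thesis by simp
  qed
  have x0Y: "x0 \<in> {x0-\<delta>..x0+\<delta>}" and t0Y: "t0 \<in> {t0-\<delta>..t0+\<delta>}" using dpos by auto
  have subR: "{0..R0} \<subseteq> {0..R x0 t0+\<delta>}" "{0..R0} \<subseteq> {-\<delta>..R x0 t0+\<delta>}" using dpos by (auto simp: R0_def)
  have cE: "continuous_on {0..R0} ETA"
    unfolding ETA_def by (rule continuous_on_subset[OF X.et_cont subR(1)])
  have cEx: "continuous_on {0..R0} X.etd" by (rule continuous_on_subset[OF X.etd_cont subR(1)])
  have cEt: "continuous_on {0..R0} T.etd" by (rule continuous_on_subset[OF T.etd_cont subR(1)])
  have cv: "continuous_on {0..R0} (\<lambda>r. Vx x0 r t0)" using X.v_cont[OF x0Y subR(2)] by simp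
  have cvx: "continuous_on {0..R0} (\<lambda>r. FVd e1 (x0, r, t0))"
    using cont_section[OF X.vyc x0Y subR(2)] by simp
  have cI: "continuous_on {0..R0} (X.I x0)" by (rule X.I_cont1[OF x0Y subR(2)])
  define FVr where "FVr = (\<lambda>(x,r,t). Vr x r t)"
  have OmR: "(x0, r, t0) \<in> UR" if "r \<in> {0..R0}" for r using Om UR(2) that by auto
  have FVrc: "continuous_on UR FVr" using smooth_on_cont[OF UR(3) UR(1)] by (simp add: FVr_def)
  have cw: "continuous_on {0..R0} (\<lambda>r. Vr x0 r t0)"
  proof -
    have "continuous_on {0..R0} (\<lambda>r. FVr (x0, r, t0))"
      by (rule continuous_on_compose2[OF FVrc]) (use OmR in \<open>auto intro!: continuous_intros\<close>)
    then show ?thesis by (simp add: FVr_def)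
  qed
  \<comment> \<open>the incompressibility integration by parts\<close>
  define w0 where "w0 = Vr x0 R0 t0"
  define v0 where "v0 = Vx x0 R0 t0"
  define b9 where "b9 r = -(r * FVd e1 (x0, r, t0)) * (ETA r - E0) + r * Vr x0 r t0 * ((r * X.I x0 r - m0 * r / 2) / D)" for r
  have b9_int: "(b9 has_integral (R0 * w0 * (ETA R0 - E0))) {0..R0}"
  proof -
    have "(b9 has_integral ((\<lambda>r. r * Vr x0 r t0 * (ETA r - E0)) R0 - (\<lambda>r. r * Vr x0 r t0 * (ETA r - E0)) 0)) {0..R0}"
    proof (rule fundamental_theorem_of_calculus_interior)
      show "0 \<le> R0" using R0pos by simp
      show "continuous_on {0..R0} (\<lambda>r. r * Vr x0 r t0 * (ETA r - E0))"
        by (intro continuous_intros cw cE)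
      fix r assume r: "r \<in> {0<..<R0}"
      then have rr: "r \<in> {0..R0}" and r2: "r \<in> {0<..<R x0 t0+\<delta>}" using dpos by (auto simp: R0_def)
      define VR2 where "VR2 = frechet_derivative FVr (at (x0, r, t0)) e2"
      have dVr: "((\<lambda>s. Vr x0 s t0) has_real_derivative VR2) (at r)"
        using pd3_2[of Vr x0 r t0] smooth_on_diff[OF UR(3) OmR[OF rr]] by (simp add: VR2_def FVr_def)
      have drV: "((\<lambda>s. s * Vr x0 s t0) has_real_derivative 1 * Vr x0 r t0 + VR2 * r) (at r)"
        by (intro DERIV_mult DERIV_ident dVr)
      have "pdr (\<lambda>x r t. r * Vr x r t) x0 r t0 = 1 * Vr x0 r t0 + VR2 * r"
        unfolding pdr_def by (rule DERIV_imp_deriv) (use drV in simp)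
      then have inc: "1 * Vr x0 r t0 + VR2 * r = - (r * FVd e1 (x0, r, t0))"
        using incompressible[of r x0 t0] pdxV[OF rr] rr by (simp add: R0_def)
      have dE: "((\<lambda>s. ETA s - E0) has_real_derivative (r * X.I x0 r - m0 * r / 2) / D - 0) (at r)"
        unfolding ETA_def m0_def by (intro DERIV_diff X.et_rder[OF r2] DERIV_const)
      have "((\<lambda>s. s * Vr x0 s t0 * (ETA s - E0)) has_real_derivative
          (1 * Vr x0 r t0 + VR2 * r) * (ETA r - E0) + ((r * X.I x0 r - m0 * r / 2) / D - 0) * (r * Vr x0 r t0)) (at r)"
        by (rule DERIV_mult[OF drV dE])
      moreover have "(1 * Vr x0 r t0 + VR2 * r) * (ETA r - E0) + ((r * X.I x0 r - m0 * r / 2) / D - 0) * (r * Vr x0 r t0) = b9 r"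
        unfolding inc b9_def by (simp add: algebra_simps)
      ultimately show "((\<lambda>r. r * Vr x0 r t0 * (ETA r - E0)) has_vector_derivative b9 r) (at r)"
        by (simp add: has_real_derivative_iff_has_vector_derivative)
    qed
    then show ?thesis by (simp add: w0_def)
  qed
  define K1 where "K1 y = integral {0..R y t0} (\<lambda>r. (r * Vx y r t0) * X.et y r)" for y
  define K1d where "K1d = integral {0..R0} (\<lambda>r. (r * FVd e1 (x0, r, t0)) * X.et x0 r + (r * Vx x0 r t0) * X.etd r)
      + Rx * ((R0 * Vx x0 R0 t0) * X.et x0 R0)"
  have boxsub: "{x0-\<delta>..x0+\<delta>} \<times> {0..R x0 t0+\<delta>} \<subseteq> {x0-\<delta>..x0+\<delta>} \<times> {-\<delta>..R x0 t0+\<delta>}"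
    using dpos by auto
  have K1_der: "(K1 has_real_derivative K1d) (at x0)"
    unfolding K1_def[abs_def] K1d_def R0_def
  proof (rule X.LM_et)
    show "continuous_on ({x0-\<delta>..x0+\<delta>} \<times> {0..R x0 t0+\<delta>}) (\<lambda>(y,r). r * Vx y r t0)"
      using continuous_on_subset[OF X.vc boxsub] by (auto simp: split_beta' intro!: continuous_intros)
    show "continuous_on ({x0-\<delta>..x0+\<delta>} \<times> {0..R x0 t0+\<delta>}) (\<lambda>(y,r). r * FVd e1 (y, r, t0))"
      using continuous_on_subset[OF X.vyc boxsub] by (auto simp: split_beta' intro!: continuous_intros)
    show "((\<lambda>y. r * Vx y r t0) has_real_derivative r * FVd e1 (y, r, t0)) (at y within {x0-\<delta>..x0+\<delta>})"
      if "y \<in> {x0-\<delta>..x0+\<delta>}" "r \<in> {0..R x0 t0+\<delta>}" for y r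
      using X.vd[of y r] that dpos by (auto intro: DERIV_cmult)
  qed
  define S where "S y = integral {0..R y t0} (\<lambda>r. Vx y r t0 * r)" for y
  define Sd where "Sd = integral {0..R0} (\<lambda>r. FVd e1 (x0, r, t0) * r) + Rx * (Vx x0 R0 t0 * R0)"
  have S_der: "(S has_real_derivative Sd) (at x0)"
    unfolding S_def[abs_def] Sd_def R0_def by (rule X.S_der)
  have mS: "X.m y = 2 / (R y t0)^2 * S y" for y by (simp add: X.m_def S_def)
  have md_eq: "X.md = -(4*Rx/R0^3) * S x0 + 2/R0^2 * Sd"
  proof -
    have "((\<lambda>y. 2 / (R y t0)^2 * S y) has_real_derivative -(4*Rx/R0^3) * S x0 + 2/R0^2 * Sd) (at x0)"
      unfolding R0_def by (rule deriv_avg[OF Rx_der S_der]) (use Rpos in \<open>simp add: less_imp_neq[symmetric]\<close>)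
    moreover have "(\<lambda>y. 2 / (R y t0)^2 * S y) = X.m" by (rule ext) (simp add: mS)
    ultimately have "(X.m has_real_derivative -(4*Rx/R0^3) * S x0 + 2/R0^2 * Sd) (at x0)" by simp
    then show ?thesis by (rule DERIV_unique[OF X.m_der])
  qed
  define Qf where "Qf = (\<lambda>x r t. (R x t)^2 * eta D R Vx x r t * Vxt x r t)"
  obtain e where e: "e > 0" "e \<le> \<delta>" "\<And>y. y \<in> ball x0 e \<Longrightarrow> R y t0 < R x0 t0 + \<delta>"
    using X.near by blast
  have ravgQ: "ravg R Qf y t0 = 2 * (K1 y - X.m y * PX y)" if y: "y \<in> ball x0 e" for y
  proof -
    have yY: "y \<in> {x0-\<delta>..x0+\<delta>}" using y e by (auto simp: dist_real_def)
    have sub: "{0..R y t0} \<subseteq> {0..R x0 t0+\<delta>}" and sub': "{0..R y t0} \<subseteq> {-\<delta>..R x0 t0+\<delta>}"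
      using e(3)[OF y] dpos by auto
    have ce: "continuous_on {0..R y t0} (X.et y)" by (rule continuous_on_subset[OF X.et_cont_y[OF yY] sub])
    have cvy: "continuous_on {0..R y t0} (\<lambda>r. Vx y r t0)" using X.v_cont[OF yY sub'] by simp
    have "integral {0..R y t0} (\<lambda>r. Qf y r t0 * r) =
        (R y t0)^2 * integral {0..R y t0} (\<lambda>r. (r * Vx y r t0) * X.et y r)
        + (- ((R y t0)^2 * X.m y)) * integral {0..R y t0} (\<lambda>r. X.et y r * r)
        + 0 * integral {0..R y t0} (\<lambda>r. 0)"
    proof (rule lin3)
      show "(\<lambda>r. (r * Vx y r t0) * X.et y r) integrable_on {0..R y t0}"
        by (intro integrable_continuous_real continuous_intros ce cvy)
      show "(\<lambda>r. X.et y r * r) integrable_on {0..R y t0}"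
        by (intro integrable_continuous_real continuous_intros ce)
      show "(\<lambda>r. 0::real) integrable_on {0..R y t0}" by (rule integrable_0)
      show "Qf y r t0 * r = (R y t0)^2 * ((r * Vx y r t0) * X.et y r) + (- ((R y t0)^2 * X.m y)) * (X.et y r * r) + 0 * 0"
        for r by (simp add: Qf_def Vxt_def etaX mX algebra_simps)
    qed
    then have "integral {0..R y t0} (\<lambda>r. Qf y r t0 * r) = (R y t0)^2 * (K1 y - X.m y * PX y)"
      by (simp add: K1_def PX_def algebra_simps)
    then show ?thesis using Rpos[of y t0] by (simp add: ravg_def)
  qed
  define Fd where "Fd = ax * (2 * (K1 x0 - X.m x0 * PX x0)) + (2 * (K1d - (X.md * PX x0 + PXd * X.m x0))) * pdx2 C x0 t0"
  have F_der: "((\<lambda>y. pdx2 C y t0 * ravg R Qf y t0) has_real_derivative Fd) (at x0)"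
  proof -
    have "((\<lambda>y. pdx2 C y t0 * (2 * (K1 y - X.m y * PX y))) has_real_derivative Fd) (at x0)"
      unfolding Fd_def by (intro DERIV_mult a_dx DERIV_cmult DERIV_diff K1_der X.m_der PX_der)
    then show ?thesis
      by (rule has_field_derivative_transform_within_open[where S="ball x0 e"]) (use e ravgQ in auto)
  qed
  have pdx2_eq: "pdx2 (\<lambda>x t. pdx2 C x t * ravg R (\<lambda>x r t. (R x t)^2 * eta D R Vx x r t * Vxt x r t) x t) x0 t0 = Fd"
    unfolding Qf_def[symmetric] pdx2_def[of "\<lambda>x t. pdx2 C x t * ravg R Qf x t"] by (rule DERIV_imp_deriv[OF F_der])
  define b1 where "b1 r = ETA r * r" for r
  define b2 where "b2 r = 0 * T.et t0 r + r * T.etd r" for r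
  define b3 where "b3 r = (r::real)" for r
  define b4 where "b4 r = (r * Vx x0 r t0) * X.et x0 r" for r
  define b5 where "b5 r = Vx x0 r t0 * r" for r
  define b6 where "b6 r = (r * FVd e1 (x0, r, t0)) * X.et x0 r + (r * Vx x0 r t0) * X.etd r" for r
  define b7 where "b7 r = 0 * X.et x0 r + r * X.etd r" for r
  define b8 where "b8 r = FVd e1 (x0, r, t0) * r" for r
  define J1 where "J1 = integral {0..R0} b1"
  define J2 where "J2 = integral {0..R0} b2"
  define J4 where "J4 = integral {0..R0} b4"
  define J5 where "J5 = integral {0..R0} b5"
  define J6 where "J6 = integral {0..R0} b6"
  define J7 where "J7 = integral {0..R0} b7"
  define J8 where "J8 = integral {0..R0} b8"
  define J9 where "J9 = R0 * w0 * (ETA R0 - E0)"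
  have cEX: "continuous_on {0..R0} (X.et x0)" using cE by (simp add: ETA_def[abs_def])
  have cET: "continuous_on {0..R0} (T.et t0)" using cE by (simp add: ETA_def[abs_def] etaXT[abs_def])
  have i1: "b1 integrable_on {0..R0}" unfolding b1_def[abs_def]
    by (intro integrable_continuous_real continuous_intros cE)
  have i2: "b2 integrable_on {0..R0}" unfolding b2_def[abs_def]
    by (intro integrable_continuous_real continuous_intros cET cEt)
  have i4: "b4 integrable_on {0..R0}" unfolding b4_def[abs_def]
    by (intro integrable_continuous_real continuous_intros cv cEX)
  have i5: "b5 integrable_on {0..R0}" unfolding b5_def[abs_def]
    by (intro integrable_continuous_real continuous_intros cv)
  have i6: "b6 integrable_on {0..R0}" unfolding b6_def[abs_def]
    by (intro integrable_continuous_real continuous_intros cv cvx cEX cEx)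
  have i8: "b8 integrable_on {0..R0}" unfolding b8_def[abs_def]
    by (intro integrable_continuous_real continuous_intros cvx)
  have J3: "integral {0..R0} b3 = R0^2 / 2"
    using int_pow[of R0 1] R0pos by (simp add: b3_def[abs_def] power2_eq_square)
  have i3: "b3 integrable_on {0..R0}" unfolding b3_def[abs_def]
    by (intro integrable_continuous_real continuous_intros)
  define LC where "LC = (aT - Qc) * J1 + a0 * J2 + (G2 x0 t0 - aT*E0 - a0*Et + Qc*E0) * (R0^2/2)
      + ax * J4 + (- ax*E0 - a0*Ex) * J5 + a0 * J6 + (- a0*E0) * J8 + a0 * J9"
  have "((\<lambda>r. (1/D) * ((aT - Qc) * b1 r + a0 * b2 r + (G2 x0 t0 - aT*E0 - a0*Et + Qc*E0) * b3 r
      + ax * b4 r + (- ax*E0 - a0*Ex) * b5 r + a0 * b6 r + (- a0*E0) * b8 r + a0 * b9 r))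
      has_integral (1/D) * LC) {0..R0}"
    unfolding LC_def J1_def J2_def J3[symmetric] J4_def J5_def J6_def J8_def J9_def
    by (intro has_integral_mult_right has_integral_add b9_int integrable_integral i1 i2 i3 i4 i5 i6 i8)
  moreover have "(\<lambda>r. (1/D) * ((aT - Qc) * b1 r + a0 * b2 r + (G2 x0 t0 - aT*E0 - a0*Et + Qc*E0) * b3 r
      + ax * b4 r + (- ax*E0 - a0*Ex) * b5 r + a0 * b6 r + (- a0*E0) * b8 r + a0 * b9 r)) = (\<lambda>r. r * RHS r / D)"
    unfolding RHS_def b1_def b2_def b3_def b4_def b5_def b6_def b8_def b9_def ETA_def
    by (rule ext) (simp add: field_simps)
  ultimately have "((\<lambda>r. r * RHS r / D) has_integral (1/D) * LC) {0..R0}" by simp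
  then have LC0: "LC = 0" using FTC Dpos by (auto dest: has_integral_unique)
  have r1: "PX x0 = J1" by (simp add: J1_def PX_def b1_def[abs_def] ETA_def R0_def)
  have r2: "E0 = 2 / R0^2 * J1" using EX[of x0] r1 by (simp add: E0_def R0_def)
  have r10: "S x0 = J5" by (simp add: J5_def S_def b5_def[abs_def] R0_def)
  have r3: "m0 = 2 / R0^2 * J5" using mS[of x0] r10 by (simp add: m0_def R0_def)
  have r4: "PT t0 = J1" by (simp add: J1_def PT_def b1_def[abs_def] ETA_def R0_def etaXT)
  have r5: "PTd = J2 + Rt * (R0 * ETA R0)" by (simp add: PTd_def J2_def b2_def[abs_def] ETA_def etaXT)
  have r6: "PXd = J7 + Rx * (R0 * ETA R0)" by (simp add: PXd_def J7_def b7_def[abs_def] ETA_def)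
  have r7: "K1 x0 = J4" by (simp add: J4_def K1_def b4_def[abs_def] R0_def)
  have r8: "K1d = J6 + Rx * ((R0 * v0) * ETA R0)" by (simp add: K1d_def J6_def b6_def[abs_def] ETA_def v0_def)
  have r9: "Sd = J8 + Rx * (v0 * R0)" by (simp add: Sd_def J8_def b8_def[abs_def] v0_def)
  have stream: "w0 = Rt + v0 * Rx"
    using streamline[of x0 t0] by (simp add: w0_def v0_def Rt_eq Rx_eq R0_def)
  have G2e: "G2 x0 t0 = -(2/R0^2) * ((aT - Qc) * J1 + a0 * J2 + (- aT*E0 - a0*Et + Qc*E0) * (R0^2/2)
      + ax * J4 + (- ax*E0 - a0*Ex) * J5 + a0 * J6 + (- a0*E0) * J8 + a0 * J9)"
    using LC0 R0pos unfolding LC_def by (simp add: field_simps)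
  have Fd': "Fd = ax * (2 * (J4 - m0 * J1)) + (2 * (J6 + Rx * ((R0 * v0) * ETA R0) - ((-(4*Rx/R0^3) * J5 + 2/R0^2 * (J8 + Rx * (v0 * R0))) * J1 + (J7 + Rx * (R0 * ETA R0)) * m0))) * a0"
    unfolding Fd_def r7 r1 r8 md_eq r10 r9 r6 by (simp add: m0_def a0_def)
  show "G2 x0 t0 = - (1 / (R x0 t0)^2) *
             pdx2 (\<lambda>x t. pdx2 C x t *
                      ravg R (\<lambda>x r t. (R x t)^2 * eta D R Vx x r t * Vxt x r t) x t) x0 t0"
    unfolding pdx2_eq Fd' G2e R0_def[symmetric] J9_def stream Et_def Ex_def r4 r5 r6 r2 r3
    using R0pos by (simp add: field_simps r1) (simp add: algebra_simps power_Suc[symmetric])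
qed


end
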